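(* For a bounded CAD geometry $\Omega \subset \mathbb{R}^d$ with a smoothly twice-differentiable boundary $\partial \Omega$, and a sufficiently refined background mesh, the volume insertion error is bounded by $|V_{\textup{exact}} - V_h| \leq C h^{2}$, where $V_h$ and $V_{\textup{exact}}$ are the approximate and exact volumes, respectively, $C$ is a constant, and $h$ is the background element size.
   Context: The geometry $\Omega$ is covered by a mesh $\mathcal{T} = \cup_e \overline{K^e}$ of hexahedral elements $\{K^e\}_{e=1}^{n_{\text{el}}}$ of size $h$. The approximate volume $V_h$ is produced by a volume fraction insertion procedure: in each element (or subhexahedron at the finest adaptive subdivision) intersecting $\partial\Omega$, the geometry is approximated by a plane through the point $\boldsymbol{x}_p \in \partial\Omega$ closest to the element's mean-coordinate centroid $\boldsymbol{x}_c$, with normal parallel to $\boldsymbol{x}_c - \boldsymbol{x}_p$ and oriented outward from $\Omega$ (determined via an inside/outside query); the volume of the element cut by this plane on the inside gives the element's contribution, while elements entirely inside or outside $\Omega$ contribute their full volume or zero. Equivalently, with $f(\boldsymbol{x},\Omega)$ the signed distance to $\partial\Omega$ (negative inside $\Omega$), $\Phi$ the step function ($\Phi(x)=1$ for $x\le 0$, $0$ otherwise), and $g^e(\boldsymbol{x}) = f(\boldsymbol{x}_p,\Omega) + (\boldsymbol{x}-\boldsymbol{x}_p)\cdot\nabla_{\boldsymbol{x}} f(\boldsymbol{x}_p,\Omega)$ the local linear approximation of $f$ on $K^e$, one has $V_{\text{exact}} = \sum_{K^e} \int_{K^e} \Phi(f(\boldsymbol{x},\Omega))\,\mathrm{d}\boldsymbol{x}$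 and $V_h = \sum_{K^e} \int_{K^e} \Phi(g^e(\boldsymbol{x}))\,\mathrm{d}\boldsymbol{x}$. *)

theory Defs
  imports "HOL-Analysis.Analysis"
begin

definition signed_dist :: "'a::euclidean_space set \<Rightarrow> 'a \<Rightarrow> real" where
  "signed_dist \<Omega> x =
     (if x \<in> \<Omega> then - infdist x (frontier \<Omega>) else infdist x (frontier \<Omega>))"

definition grad_at :: "('a::euclidean_space \<Rightarrow> real) \<Rightarrow> 'a \<Rightarrow> 'a" where
  "grad_at f x = (SOME v. (f has_derivative (\<lambda>y. v \<bullet> y)) (at x))"

definition C2_boundary :: "'a::euclidean_space set \<Rightarrow> bool" where
  "C2_boundary \<Omega> \<longleftrightarrow>
     (\<forall>p\<in>frontier \<Omega>. \<exists>U (\<phi>::'a \<Rightarrow> real) (D1::'a \<Rightarrow> 'a) (D2::'a \<Rightarrow> 'a \<Rightarrow>\<^sub>L 'a).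
        open U \<and> p \<in> U \<and> \<Omega> \<inter> U = {x\<in>U. \<phi> x < 0} \<and>
        (\<forall>x\<in>U. (\<phi> has_derivative (\<lambda>v. D1 x \<bullet> v)) (at x)) \<and>
        (\<forall>x\<in>U. (D1 has_derivative blinfun_apply (D2 x)) (at x)) \<and>
        continuous_on U D2 \<and>
        (\<forall>x\<in>U. D1 x \<noteq> 0))"

definition int_pts :: "'a::euclidean_space set" where
  "int_pts = {k. \<forall>i\<in>Basis. k \<bullet> i \<in> \<int>}"

definition grid_cell :: "real \<Rightarrow> 'a::euclidean_space \<Rightarrow> 'a set" where
  "grid_cell h k = cbox (h *\<^sub>R k) (h *\<^sub>R (k + One))"

definition cell_centroid :: "real \<Rightarrow> 'a::euclidean_space \<Rightarrow> 'a" where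
  "cell_centroid h k = h *\<^sub>R (k + (1/2) *\<^sub>R One)"

text \<open>Contribution of one element; cp selects a closest boundary point.\<close>
definition elem_vol :: "'a::euclidean_space set \<Rightarrow> real \<Rightarrow> ('a \<Rightarrow> 'a) \<Rightarrow> 'a \<Rightarrow> real" where
  "elem_vol \<Omega> h cp k =
     (let K = grid_cell h k; xp = cp (cell_centroid h k) in
      if K \<inter> frontier \<Omega> \<noteq> {} then
        measure lebesgue {x\<in>K. signed_dist \<Omega> xp
                + (x - xp) \<bullet> grad_at (signed_dist \<Omega>) xp \<le> 0}
      else if K \<subseteq> \<Omega> then measure lebesgue K
      else 0)"

definition V_h :: "'a::euclidean_space set \<Rightarrow> real \<Rightarrow> ('a \<Rightarrow> 'a) \<Rightarrow> real" where
  "V_h \<Omega> h cp = (\<Sum>k\<in>{k\<in>int_pts. grid_cell h k \<inter> closure \<Omega> \<noteq> {}}. elem_vol \<Omega> h cp k)"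

definition V_exact :: "'a::euclidean_space set \<Rightarrow> real" where
  "V_exact \<Omega> = measure lebesgue {x. signed_dist \<Omega> x \<le> 0}"

end

theory Submission
  imports Defs
begin


lemma infdist_geI:
  assumes "A \<noteq> {}" "\<And>a. a \<in> A \<Longrightarrow> d \<le> dist x a"
  shows "d \<le> infdist x A"
  using assms by (simp add: infdist_notempty cINF_greatest)

lemma C2_chart:
  fixes \<Omega> :: "'a::euclidean_space set"
  assumes "C2_boundary \<Omega>" "p \<in> frontier \<Omega>"
  obtains U \<phi> D1 D2 where "open U" "p \<in> U" "\<Omega> \<inter> U = {x\<in>U. \<phi> x < 0}"
    "\<And>x. x\<in>U \<Longrightarrow> (\<phi> has_derivative (\<lambda>v. D1 x \<bullet> v)) (at x)"
    "\<And>x. x\<in>U \<Longrightarrow> (D1 has_derivative blinfun_apply (D2 x)) (at x)"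
    "continuous_on U D2" "\<And>x. x\<in>U \<Longrightarrow> D1 x \<noteq> 0"
proof -
  have "\<exists>U (\<phi>::'a \<Rightarrow> real) (D1::'a \<Rightarrow> 'a) (D2::'a \<Rightarrow> 'a \<Rightarrow>\<^sub>L 'a).
        open U \<and> p \<in> U \<and> \<Omega> \<inter> U = {x\<in>U. \<phi> x < 0} \<and>
        (\<forall>x\<in>U. (\<phi> has_derivative (\<lambda>v. D1 x \<bullet> v)) (at x)) \<and>
        (\<forall>x\<in>U. (D1 has_derivative blinfun_apply (D2 x)) (at x)) \<and>
        continuous_on U D2 \<and>
        (\<forall>x\<in>U. D1 x \<noteq> 0)"
    using assms(1) unfolding C2_boundary_def using assms(2) by (rule bspec)
  then show ?thesis
    apply (elim exE conjE)
    apply (rule that)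
    by auto
qed
lemma C2_open:
  assumes "C2_boundary \<Omega>"
  shows "open \<Omega>"
proof -
  have "\<Omega> \<inter> frontier \<Omega> = {}"
  proof (rule ccontr)
    assume "\<Omega> \<inter> frontier \<Omega> \<noteq> {}"
    then obtain p where p: "p \<in> \<Omega>" "p \<in> frontier \<Omega>" by blast
    obtain U \<phi> D1 D2 where U: "open U" "p \<in> U" "\<Omega> \<inter> U = {x\<in>U. \<phi> x < 0}"
      and d: "\<And>x. x\<in>U \<Longrightarrow> (\<phi> has_derivative (\<lambda>v. D1 x \<bullet> v)) (at x)"
      using C2_chart[OF assms p(2)] by metis
    have cont: "continuous_on U \<phi>"
      by (meson d has_derivative_continuous continuous_at_imp_continuous_on)
    have "open {x\<in>U. \<phi> x < 0}"
      using continuous_open_preimage[OF cont U(1), of "{..<0}"] by (auto simp: vimage_def Int_def) 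
    moreover have "p \<in> {x\<in>U. \<phi> x < 0}" using U p by blast
    moreover have "{x\<in>U. \<phi> x < 0} \<subseteq> \<Omega>" using U by blast
    ultimately have "p \<in> interior \<Omega>" by (meson interiorI)
    then show False using p(2) by (simp add: frontier_def)
  qed
  then have "\<Omega> \<subseteq> interior \<Omega>"
    using closure_subset by (auto simp: frontier_def)
  then show ?thesis
    by (metis interior_subset open_interior subset_antisym)
qed

lemma open_frontier_disj: "open \<Omega> \<Longrightarrow> \<Omega> \<inter> frontier \<Omega> = {}"
  by (simp add: frontier_def interior_open)

lemma seg_frontier:
  fixes x z :: "'a::euclidean_space"
  assumes "x \<in> \<Omega> \<longleftrightarrow> z \<notin> \<Omega>"
  shows "infdist x (frontier \<Omega>) \<le> dist x z"
proof -
  have "closed_segment x z \<inter> frontier \<Omega> \<noteq> {}"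
    apply (rule connected_Int_frontier)
    using assms by (auto intro: connected_segment)
  then obtain y where y: "y \<in> closed_segment x z" "y \<in> frontier \<Omega>" by blast
  have "dist x y \<le> dist x z" using dist_in_closed_segment[OF y(1)] by (simp add: dist_commute)
  then show ?thesis using infdist_le2[OF y(2)] by blast
qed

lemma ball_side:
  fixes x c :: "'a::euclidean_space"
  assumes "0 < r" "r \<le> dist x c" "\<And>z. z \<in> ball c r \<Longrightarrow> (x \<in> \<Omega> \<longleftrightarrow> z \<notin> \<Omega>)"
  shows "infdist x (frontier \<Omega>) \<le> dist x c - r"
proof (rule field_le_epsilon)
  fix e :: real assume "0 < e"
  define e' where "e' = min e r"
  have e': "0 < e'" "e' \<le> e" "e' \<le> r" using \<open>0<e\<close> assms by (auto simp: e'_def)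
  define L where "L = dist x c"
  have L: "L > 0" using assms L_def by auto
  define z where "z = c + ((r - e')/L) *\<^sub>R (x - c)"
  have nz: "norm (x - c) = L" by (simp add: L_def dist_norm)
  have dzc: "dist z c = r - e'"
    using L e' by (simp add: z_def dist_norm nz)
  have "z - x = (1 - (r - e')/L) *\<^sub>R (c - x)"
    by (simp add: z_def algebra_simps)
  then have "dist x z = \<bar>1 - (r - e')/L\<bar> * L"
    by (simp add: dist_norm norm_minus_commute[of x z] norm_minus_commute[of c x] nz)
  also have "\<bar>1 - (r - e')/L\<bar> = 1 - (r - e')/L"
    using L e' assms(2) L_def by (auto simp: field_simps)
  also have "(1 - (r - e')/L) * L = L - (r - e')"
  proof -
    have "(r - e')/L * L = r - e'" using L by simp
    then show ?thesis by (simp add: left_diff_distrib)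
  qed
  finally have dxz: "dist x z = L - r + e'" by simp
  have "z \<in> ball c r" using dzc e' by (simp add: dist_commute)
  then have "infdist x (frontier \<Omega>) \<le> dist x z" using seg_frontier assms(3) by blast
  then show "infdist x (frontier \<Omega>) \<le> dist x c - r + e" using dxz e' L_def by linarith
qed

lemma sd_lower:
  fixes c :: "'a::euclidean_space"
  assumes "open \<Omega>" "frontier \<Omega> \<noteq> {}" "0 < r" "ball c r \<inter> \<Omega> = {}"
  shows "r - dist x c \<le> signed_dist \<Omega> x"
proof (cases "x \<in> \<Omega>")
  case True
  then have "x \<notin> ball c r" using assms by blast
  then have "r \<le> dist x c" by (simp add: dist_commute)
  have "infdist x (frontier \<Omega>) \<le> dist x c - r"
    apply (rule ball_side[OF assms(3) \<open>r \<le> dist x c\<close>])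
    using assms(4) True by blast
  then show ?thesis using True by (simp add: signed_dist_def)
next
  case False
  have "r - dist x c \<le> infdist x (frontier \<Omega>)"
  proof (rule infdist_geI[OF assms(2)])
    fix y assume y: "y \<in> frontier \<Omega>"
    show "r - dist x c \<le> dist x y"
    proof (rule ccontr)
      assume "\<not> ?thesis"
      then have "y \<in> ball c r" using dist_triangle[of y c x] by (simp add: dist_commute)
      moreover have "y \<in> closure \<Omega>" using y by (simp add: frontier_def)
      ultimately show False using assms(4) open_Int_closure_eq_empty[of "ball c r" \<Omega>] by auto
    qed
  qed
  then show ?thesis using False by (simp add: signed_dist_def)
qed

lemma sd_upper:
  fixes c :: "'a::euclidean_space"
  assumes "open \<Omega>" "frontier \<Omega> \<noteq> {}" "0 < r" "ball c r \<subseteq> \<Omega>"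
  shows "signed_dist \<Omega> x \<le> dist x c - r"
proof (cases "x \<in> \<Omega>")
  case False
  then have "x \<notin> ball c r" using assms by blast
  then have "r \<le> dist x c" by (simp add: dist_commute)
  have "infdist x (frontier \<Omega>) \<le> dist x c - r"
    apply (rule ball_side[OF assms(3) \<open>r \<le> dist x c\<close>])
    using assms(4) False by blast
  then show ?thesis using False by (simp add: signed_dist_def)
next
  case True
  have "r - dist x c \<le> infdist x (frontier \<Omega>)"
  proof (rule infdist_geI[OF assms(2)])
    fix y assume y: "y \<in> frontier \<Omega>"
    show "r - dist x c \<le> dist x y"
    proof (rule ccontr)
      assume "\<not> ?thesis"
      then have "y \<in> ball c r" using dist_triangle[of y c x] by (simp add: dist_commute)
      then have "y \<in> \<Omega>" using assms(4) by blast
      then show False using y open_frontier_disj[OF assms(1)] by blast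
    qed
  qed
  then show ?thesis using True by (simp add: signed_dist_def)
qed



lemma sd_quadratic:
  fixes p n x :: "'a::euclidean_space"
  assumes "open \<Omega>" "frontier \<Omega> \<noteq> {}" "0 < r" "norm n = 1"
    "ball (p + r *\<^sub>R n) r \<inter> \<Omega> = {}" "ball (p - r *\<^sub>R n) r \<subseteq> \<Omega>" "norm (x - p) \<le> r"
  shows "\<bar>signed_dist \<Omega> x - (x - p) \<bullet> n\<bar> \<le> norm (x - p)^2 / r"
proof -
  define u where "u = x - p"
  define a where "a = u \<bullet> n"
  define w where "w = norm u ^ 2"
  define t where "t = w / r"
  have rt: "r * t = w" using assms(3) by (simp add: t_def)
  have t0: "0 \<le> t" using assms(3) by (simp add: t_def w_def)
  have au: "\<bar>a\<bar> \<le> norm u" using Cauchy_Schwarz_ineq2[of u n] assms(4) by (simp add: a_def)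
  have ur: "norm u \<le> r" using assms(7) by (simp add: u_def)
  have nn: "n \<bullet> n = 1" using assms(4) by (simp add: norm_eq_1)
  have sq1: "norm (u - r *\<^sub>R n)^2 = w - 2*r*a + r^2"
  proof -
    have "norm (u - r *\<^sub>R n)^2 = (u - r *\<^sub>R n) \<bullet> (u - r *\<^sub>R n)" by (simp only: power2_norm_eq_inner)
    also have "\<dots> = u \<bullet> u - 2*r*(u \<bullet> n) + r^2*(n \<bullet> n)"
      by (simp add: inner_diff_left inner_diff_right inner_commute[of n u] power2_eq_square algebra_simps)
    finally show ?thesis using nn by (simp add: a_def w_def power2_norm_eq_inner)
  qed
  have sq2: "norm (u + r *\<^sub>R n)^2 = w + 2*r*a + r^2"
  proof -
    have "norm (u + r *\<^sub>R n)^2 = (u + r *\<^sub>R n) \<bullet> (u + r *\<^sub>R n)" by (simp only: power2_norm_eq_inner)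
    also have "\<dots> = u \<bullet> u + 2*r*(u \<bullet> n) + r^2*(n \<bullet> n)"
      by (simp add: inner_add_left inner_add_right inner_commute[of n u] power2_eq_square algebra_simps)
    finally show ?thesis using nn by (simp add: a_def w_def power2_norm_eq_inner)
  qed
  have d1: "dist x (p + r *\<^sub>R n) = norm (u - r *\<^sub>R n)" by (simp add: dist_norm u_def algebra_simps)
  have d2: "dist x (p - r *\<^sub>R n) = norm (u + r *\<^sub>R n)" by (simp add: dist_norm u_def algebra_simps)
  have b1: "norm (u - r *\<^sub>R n) \<le> r - a + t"
  proof (rule power2_le_imp_le)
    have "(r - a + t)^2 = (w - 2*r*a + r^2) + ((a - t)^2 + w)"
      using rt by (simp add: power2_eq_square algebra_simps)
    then show "norm (u - r *\<^sub>R n)^2 \<le> (r - a + t)^2" using sq1 by (simp add: w_def)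
    show "0 \<le> r - a + t" using au ur t0 by linarith
  qed
  have b2: "norm (u + r *\<^sub>R n) \<le> r + a + t"
  proof (rule power2_le_imp_le)
    have "(r + a + t)^2 = (w + 2*r*a + r^2) + ((a + t)^2 + w)"
      using rt by (simp add: power2_eq_square algebra_simps)
    then show "norm (u + r *\<^sub>R n)^2 \<le> (r + a + t)^2" using sq2 by (simp add: w_def)
    show "0 \<le> r + a + t" using au ur t0 by linarith
  qed
  have lo: "r - dist x (p + r *\<^sub>R n) \<le> signed_dist \<Omega> x"
    using sd_lower[OF assms(1,2,3,5)] .
  have hi: "signed_dist \<Omega> x \<le> dist x (p - r *\<^sub>R n) - r"
    using sd_upper[OF assms(1,2,3,6)] .
  have "\<bar>signed_dist \<Omega> x - a\<bar> \<le> t" using lo hi d1 d2 b1 b2 by linarith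
  then show ?thesis by (simp add: a_def t_def w_def u_def)
qed

lemma sd_grad:
  fixes p n :: "'a::euclidean_space"
  assumes "open \<Omega>" "frontier \<Omega> \<noteq> {}" "0 < r" "norm n = 1"
    "ball (p + r *\<^sub>R n) r \<inter> \<Omega> = {}" "ball (p - r *\<^sub>R n) r \<subseteq> \<Omega>"
  shows "signed_dist \<Omega> p = 0" "(signed_dist \<Omega> has_derivative (\<lambda>v. n \<bullet> v)) (at p)"
    "grad_at (signed_dist \<Omega>) p = n"
proof -
  note Q = sd_quadratic[OF assms]
  show sp: "signed_dist \<Omega> p = 0" using Q[of p] assms(3) by simp
  show D: "(signed_dist \<Omega> has_derivative (\<lambda>v. n \<bullet> v)) (at p)"
    unfolding has_derivative_at_alt
  proof (intro conjI allI impI)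
    show "bounded_linear ((\<bullet>) n)" by (rule bounded_linear_inner_right)
    fix e :: real assume e: "0 < e"
    show "\<exists>d>0. \<forall>y. norm (y - p) < d \<longrightarrow>
            norm (signed_dist \<Omega> y - signed_dist \<Omega> p - n \<bullet> (y - p)) \<le> e * norm (y - p)"
    proof (intro exI[of _ "min r (e * r)"] conjI allI impI)
      show "0 < min r (e * r)" using e assms(3) by simp
      fix y assume y: "norm (y - p) < min r (e * r)"
      have "\<bar>signed_dist \<Omega> y - (y - p) \<bullet> n\<bar> \<le> norm (y - p)^2 / r" using Q[of y] y by simp
      also have "norm (y - p)^2 / r = norm (y - p) * (norm (y - p) / r)"
        by (simp add: power2_eq_square)
      also have "\<dots> \<le> norm (y - p) * e"
        apply (rule mult_left_mono) using y assms(3) by (auto simp: field_simps)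
      finally show "norm (signed_dist \<Omega> y - signed_dist \<Omega> p - n \<bullet> (y - p)) \<le> e * norm (y - p)"
        using sp by (simp add: inner_commute mult.commute)
    qed
  qed
  show "grad_at (signed_dist \<Omega>) p = n"
    unfolding grad_at_def
  proof (rule some_equality)
    show "(signed_dist \<Omega> has_derivative (\<lambda>y. n \<bullet> y)) (at p)" using D .
    fix v assume "(signed_dist \<Omega> has_derivative (\<lambda>y. v \<bullet> y)) (at p)"
    then have "(\<lambda>y. v \<bullet> y) = (\<lambda>y. n \<bullet> y)" using D has_derivative_unique by blast
    then have "v \<bullet> (v - n) = n \<bullet> (v - n)" by metis
    then have "(v - n) \<bullet> (v - n) = 0" by (simp add: inner_diff_left inner_commute)
    then show "v = n" by simp
  qed
qed



lemma taylor2: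
  fixes \<phi> :: "'a::euclidean_space \<Rightarrow> real"
  assumes S: "convex S"
    and d1: "\<And>x. x\<in>S \<Longrightarrow> (\<phi> has_derivative (\<lambda>v. D1 x \<bullet> v)) (at x)"
    and d2: "\<And>x. x\<in>S \<Longrightarrow> (D1 has_derivative blinfun_apply (D2 x)) (at x)"
    and M: "\<And>x. x\<in>S \<Longrightarrow> norm (D2 x) \<le> M" and x: "x \<in> S" and q: "q \<in> S"
  shows "\<bar>\<phi> x - \<phi> q - D1 q \<bullet> (x - q)\<bar> \<le> M * norm (x - q)^2"
proof -
  have lip: "norm (D1 z - D1 q) \<le> M * norm (z - q)" if z: "z \<in> S" for z
  proof (rule differentiable_bound[OF S _ _ z q])
    show "(D1 has_derivative blinfun_apply (D2 y)) (at y within S)" if "y \<in> S" for y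
      using d2[OF that] by (rule has_derivative_at_withinI)
    show "onorm (blinfun_apply (D2 y)) \<le> M" if "y \<in> S" for y
      using M[OF that] by (simp add: norm_blinfun.rep_eq)
  qed
  define \<psi> where "\<psi> z = \<phi> z - D1 q \<bullet> z" for z
  have segS: "closed_segment q x \<subseteq> S" using closed_segment_subset[OF q x S] .
  have "norm (\<psi> x - \<psi> q) \<le> (M * norm (x - q)) * norm (x - q)"
  proof (rule differentiable_bound[of "closed_segment q x" \<psi> "\<lambda>z v. (D1 z - D1 q) \<bullet> v"])
    show "convex (closed_segment q x)" by (rule convex_closed_segment)
    show "x \<in> closed_segment q x" "q \<in> closed_segment q x" by auto
    fix z assume z: "z \<in> closed_segment q x"
    then have zS: "z \<in> S" using segS by blast
    have "(\<psi> has_derivative (\<lambda>v. D1 z \<bullet> v - D1 q \<bullet> v)) (at z)"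
      unfolding \<psi>_def
      by (intro has_derivative_diff d1[OF zS] bounded_linear_imp_has_derivative bounded_linear_inner_right)
    then show "(\<psi> has_derivative (\<lambda>v. (D1 z - D1 q) \<bullet> v)) (at z within closed_segment q x)"
      by (simp add: inner_diff_left has_derivative_at_withinI)
    have dz: "norm (z - q) \<le> norm (x - q)"
      using dist_in_closed_segment[OF z] by (simp add: dist_norm norm_minus_commute)
    show "onorm (\<lambda>v. (D1 z - D1 q) \<bullet> v) \<le> M * norm (x - q)"
    proof (rule onorm_le)
      fix v
      have "norm ((D1 z - D1 q) \<bullet> v) \<le> norm (D1 z - D1 q) * norm v"
        using Cauchy_Schwarz_ineq2 by simp
      also have "\<dots> \<le> (M * norm (x - q)) * norm v"
        apply (rule mult_right_mono[OF _ norm_ge_zero])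
        using lip[OF zS] dz M[OF zS] norm_ge_zero[of "D2 z"]
        by (meson mult_left_mono order_trans)
      finally show "norm ((D1 z - D1 q) \<bullet> v) \<le> M * norm (x - q) * norm v" .
    qed
  qed
  moreover have "\<psi> x - \<psi> q = \<phi> x - \<phi> q - D1 q \<bullet> (x - q)"
    by (simp add: \<psi>_def inner_diff_right)
  ultimately show ?thesis by (simp add: power2_eq_square mult.assoc)
qed

lemma sq_expand:
  fixes u n :: "'a::euclidean_space"
  assumes "norm n = 1"
  shows "norm (u - c *\<^sub>R n)^2 = norm u ^2 - 2*c*(u \<bullet> n) + c^2"
    "norm (u + c *\<^sub>R n)^2 = norm u ^2 + 2*c*(u \<bullet> n) + c^2"
proof -
  have nn: "n \<bullet> n = 1" using assms by (simp add: norm_eq_1)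
  have "norm (u - c *\<^sub>R n)^2 = (u - c *\<^sub>R n) \<bullet> (u - c *\<^sub>R n)" by (simp only: power2_norm_eq_inner)
  also have "\<dots> = u \<bullet> u - 2*c*(u \<bullet> n) + c^2*(n \<bullet> n)"
    by (simp add: inner_diff_left inner_diff_right inner_commute[of n u] power2_eq_square algebra_simps)
  finally show "norm (u - c *\<^sub>R n)^2 = norm u ^2 - 2*c*(u \<bullet> n) + c^2"
    using nn by (simp add: power2_norm_eq_inner)
  have "norm (u + c *\<^sub>R n)^2 = (u + c *\<^sub>R n) \<bullet> (u + c *\<^sub>R n)" by (simp only: power2_norm_eq_inner)
  also have "\<dots> = u \<bullet> u + 2*c*(u \<bullet> n) + c^2*(n \<bullet> n)"
    by (simp add: inner_add_left inner_add_right inner_commute[of n u] power2_eq_square algebra_simps)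
  finally show "norm (u + c *\<^sub>R n)^2 = norm u ^2 + 2*c*(u \<bullet> n) + c^2"
    using nn by (simp add: power2_norm_eq_inner)
qed



lemma local_balls:
  fixes \<Omega> :: "'a::euclidean_space set"
  assumes C2: "C2_boundary \<Omega>" and p: "p \<in> frontier \<Omega>"
  shows "\<exists>\<epsilon>>0. \<exists>\<rho>>0. \<forall>q\<in>frontier \<Omega> \<inter> ball p \<epsilon>. \<exists>n. norm n = 1 \<and>
           (\<forall>r'. 0 < r' \<and> r' \<le> \<rho> \<longrightarrow> ball (q + r' *\<^sub>R n) r' \<inter> \<Omega> = {} \<and> ball (q - r' *\<^sub>R n) r' \<subseteq> \<Omega>)"
proof -
  have opn: "open \<Omega>" using C2_open[OF C2] .
  obtain U \<phi> D1 D2 where U: "open U" "p \<in> U" and U\<Omega>: "\<Omega> \<inter> U = {x\<in>U. \<phi> x < 0}"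
    and d1: "\<And>x. x\<in>U \<Longrightarrow> (\<phi> has_derivative (\<lambda>v. D1 x \<bullet> v)) (at x)"
    and d2: "\<And>x. x\<in>U \<Longrightarrow> (D1 has_derivative blinfun_apply (D2 x)) (at x)"
    and c2: "continuous_on U D2" and nz: "\<And>x. x\<in>U \<Longrightarrow> D1 x \<noteq> 0"
    by (rule C2_chart[OF C2 p], rule that)
  obtain e where e: "e > 0" "cball p e \<subseteq> U" using U open_contains_cball by blast
  define \<epsilon> where "\<epsilon> = e/2"
  define S where "S = cball p (2*\<epsilon>)"
  have SU: "S \<subseteq> U" using e by (simp add: S_def \<epsilon>_def)
  have \<epsilon>0: "\<epsilon> > 0" using e by (simp add: \<epsilon>_def)
  have pS: "p \<in> S" using \<epsilon>0 by (simp add: S_def)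
  have cD1: "continuous_on U D1"
    by (meson d2 has_derivative_continuous continuous_at_imp_continuous_on)
  have c\<phi>: "continuous_on U \<phi>"
    by (meson d1 has_derivative_continuous continuous_at_imp_continuous_on)
  have "\<exists>z\<in>S. \<forall>y\<in>S. norm (D1 z) \<le> norm (D1 y)"
    apply (rule continuous_attains_inf)
    using pS apply (auto simp: S_def)[2]
    by (intro continuous_on_norm continuous_on_subset[OF cD1 SU])
  then obtain z where z: "z \<in> S" "\<And>y. y\<in>S \<Longrightarrow> norm (D1 z) \<le> norm (D1 y)" by blast
  define m where "m = norm (D1 z)"
  have m0: "m > 0" using nz z SU by (auto simp: m_def)
  have "compact (D2 ` S)"
    by (rule compact_continuous_image[OF continuous_on_subset[OF c2 SU]]) (simp add: S_def)
  then have "bounded (D2 ` S)" by (rule compact_imp_bounded)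
  then obtain B where B0: "\<forall>y\<in>D2 ` S. norm y \<le> B" unfolding bounded_iff by blast
  have B: "\<And>x. x\<in>S \<Longrightarrow> norm (D2 x) \<le> B" using B0 by blast
  define M where "M = max 1 B"
  have M1: "M \<ge> 1" by (simp add: M_def)
  have MB: "\<And>x. x\<in>S \<Longrightarrow> norm (D2 x) \<le> M" using B by (force simp: M_def)
  have tay: "\<bar>\<phi> x - \<phi> q - D1 q \<bullet> (x - q)\<bar> \<le> M * norm (x - q)^2" if "x \<in> S" "q \<in> S" for x q
    apply (rule taylor2[of S \<phi> D1 D2 M])
    using SU that by (auto simp: S_def intro: d1 d2 MB)
  define \<rho> where "\<rho> = min (\<epsilon>/2) (m/(2*M))"
  have \<rho>0: "\<rho> > 0" using \<epsilon>0 m0 M1 by (simp add: \<rho>_def)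
  have key: "\<exists>n. norm n = 1 \<and>
           (\<forall>r'. 0 < r' \<and> r' \<le> \<rho> \<longrightarrow> ball (q + r' *\<^sub>R n) r' \<inter> \<Omega> = {} \<and> ball (q - r' *\<^sub>R n) r' \<subseteq> \<Omega>)"
    if q: "q \<in> frontier \<Omega> \<inter> ball p \<epsilon>" for q
  proof -
    have qS: "q \<in> S" using q \<epsilon>0 by (auto simp: S_def)
    have qU: "q \<in> U" using qS SU by blast
    have qnot: "q \<notin> \<Omega>" using q open_frontier_disj[OF opn] by blast
    have \<phi>q0: "\<phi> q \<ge> 0" using qnot qU U\<Omega> by force
    have \<phi>q1: "\<phi> q \<le> 0"
    proof (rule ccontr)
      assume "\<not> \<phi> q \<le> 0"
      define V where "V = {x\<in>U. \<phi> x > 0}"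
      have "open V"
        using continuous_open_preimage[OF c\<phi> U(1), of "{0<..}"] by (auto simp: V_def vimage_def Int_def)
      moreover have "q \<in> V" using qU \<open>\<not> \<phi> q \<le> 0\<close> by (simp add: V_def)
      moreover have "V \<inter> \<Omega> = {}"
      proof -
        have "x \<notin> \<Omega>" if "x \<in> V" for x
        proof
          assume "x \<in> \<Omega>"
          then have "x \<in> \<Omega> \<inter> U" using that by (simp add: V_def)
          then have "\<phi> x < 0" using U\<Omega> by blast
          then show False using that by (simp add: V_def)
        qed
        then show ?thesis by blast
      qed
      moreover have "q \<in> closure \<Omega>" using q by (simp add: frontier_def)
      ultimately show False using open_Int_closure_eq_empty by blast
    qed
    define g where "g = D1 q"
    have g0: "norm g \<ge> m" using z qS by (simp add: g_def m_def)
    have gpos: "norm g > 0" using g0 m0 by linarith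
    define n where "n = (1 / norm g) *\<^sub>R g"
    have n1: "norm n = 1" using gpos by (simp add: n_def)
    have gu: "g \<bullet> u = norm g * (u \<bullet> n)" for u
      using gpos by (simp add: n_def inner_commute)
    have "ball (q + r' *\<^sub>R n) r' \<inter> \<Omega> = {} \<and> ball (q - r' *\<^sub>R n) r' \<subseteq> \<Omega>"
      if r': "0 < r' \<and> r' \<le> \<rho>" for r'
    proof
      have r'M: "2*M*r' \<le> m"
      proof -
        have "r' \<le> m/(2*M)" using r' by (simp add: \<rho>_def)
        then show ?thesis using M1 by (simp add: field_simps)
      qed
      have r'\<epsilon>: "r' \<le> \<epsilon>/2" using r' by (simp add: \<rho>_def)
      have inS: "x \<in> S" if "norm (x - q) < 2*r'" for x
      proof -
        have "dist p q < \<epsilon>" using q by simp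
        moreover have "dist q x < 2*r'" using that by (simp add: dist_norm norm_minus_commute)
        ultimately have "dist p x < 2*\<epsilon>" using dist_triangle[of p x q] r'\<epsilon> by linarith
        then show ?thesis by (simp add: S_def)
      qed
      show "ball (q + r' *\<^sub>R n) r' \<inter> \<Omega> = {}"
      proof (rule ccontr)
        assume "ball (q + r' *\<^sub>R n) r' \<inter> \<Omega> \<noteq> {}"
        then obtain x where x: "x \<in> ball (q + r' *\<^sub>R n) r'" "x \<in> \<Omega>" by blast
        define u where "u = x - q"
        define a where "a = u \<bullet> n"
        have h1: "norm (u - r' *\<^sub>R n) < r'"
          using x(1) by (simp add: dist_norm u_def norm_minus_commute algebra_simps)
        have "norm (u - r' *\<^sub>R n)^2 < r'^2"
          using h1 norm_ge_zero by (simp add: power_strict_mono)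
        then have h2: "norm u ^2 < 2*r'*a" using sq_expand(1)[OF n1, of u r'] by (simp add: a_def)
        have "norm u \<le> norm (u - r' *\<^sub>R n) + norm (r' *\<^sub>R n)"
          using norm_triangle_ineq[of "u - r' *\<^sub>R n" "r' *\<^sub>R n"] by simp
        then have nu: "norm u < 2*r'" using h1 n1 r' by simp
        have xS: "x \<in> S" using inS nu by (simp add: u_def)
        have "0 < 2*r'*a" using h2 zero_le_power2[of "norm u"] by linarith
        then have a0: "a > 0" using r' by (simp add: zero_less_mult_iff)
        have T: "\<phi> x - \<phi> q - g \<bullet> u \<ge> - (M * norm u ^2)"
          using tay[OF xS qS] by (simp add: g_def u_def)
        have "M * norm u^2 < M * (2*r'*a)" using h2 M1 by simp
        moreover have "M*(2*r'*a) \<le> m*a" using r'M a0 by (simp add: mult_right_mono mult.assoc[symmetric])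
        moreover have "m*a \<le> norm g * a" using g0 a0 by (simp add: mult_right_mono)
        ultimately have "\<phi> x > \<phi> q" using T gu[of u] by (simp add: a_def)
        then have "\<phi> x > 0" using \<phi>q0 by linarith
        moreover have "x \<in> U" using xS SU by blast
        ultimately show False using x(2) U\<Omega> by force
      qed
      show "ball (q - r' *\<^sub>R n) r' \<subseteq> \<Omega>"
      proof
        fix x assume x: "x \<in> ball (q - r' *\<^sub>R n) r'"
        define u where "u = x - q"
        define a where "a = u \<bullet> n"
        have h1: "norm (u + r' *\<^sub>R n) < r'"
          using x by (simp add: dist_norm u_def norm_minus_commute algebra_simps)
        have "norm (u + r' *\<^sub>R n)^2 < r'^2"
          using h1 norm_ge_zero by (simp add: power_strict_mono)
        then have h2: "norm u ^2 < - (2*r'*a)" using sq_expand(2)[OF n1, of u r'] by (simp add: a_def)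
        have "norm u \<le> norm (u + r' *\<^sub>R n) + norm (r' *\<^sub>R n)"
          using norm_triangle_ineq4[of "u + r' *\<^sub>R n" "r' *\<^sub>R n"] by simp
        then have nu: "norm u < 2*r'" using h1 n1 r' by simp
        have xS: "x \<in> S" using inS nu by (simp add: u_def)
        have "0 < - (2*r'*a)" using h2 zero_le_power2[of "norm u"] by linarith
        then have a0: "a < 0" using r' by (simp add: zero_less_mult_iff mult_less_0_iff)
        have T: "\<phi> x - \<phi> q - g \<bullet> u \<le> M * norm u ^2"
          using tay[OF xS qS] by (simp add: g_def u_def)
        have "M * norm u^2 < M * (- (2*r'*a))" using h2 M1 by (metis mult_strict_left_mono mult_minus_right order_less_le_trans zero_less_one)
        moreover have "M*(- (2*r'*a)) \<le> m*(-a)" using r'M a0 by (simp add: mult_right_mono mult.assoc[symmetric])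
        moreover have "m*(-a) \<le> norm g * (-a)" using g0 a0 by (simp add: mult_right_mono)
        ultimately have "\<phi> x < \<phi> q" using T gu[of u] by (simp add: a_def)
        then have "\<phi> x < 0" using \<phi>q1 by linarith
        moreover have "x \<in> U" using xS SU by blast
        ultimately show "x \<in> \<Omega>" using U\<Omega> by force
      qed
    qed
    then show ?thesis using n1 by blast
  qed
  show ?thesis using key \<epsilon>0 \<rho>0 by blast
qed

lemma uniform_balls:
  fixes \<Omega> :: "'a::euclidean_space set"
  assumes bd: "bounded \<Omega>" and C2: "C2_boundary \<Omega>"
  obtains r where "0 < r" "\<And>q. q \<in> frontier \<Omega> \<Longrightarrow> \<exists>n. norm n = 1 \<and>
       ball (q + r *\<^sub>R n) r \<inter> \<Omega> = {} \<and> ball (q - r *\<^sub>R n) r \<subseteq> \<Omega>"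
proof (cases "frontier \<Omega> = {}")
  case True
  then show ?thesis using that[of 1] by simp
next
  case False
  have "\<forall>p\<in>frontier \<Omega>. \<exists>\<epsilon>\<rho>. fst \<epsilon>\<rho> > 0 \<and> snd \<epsilon>\<rho> > 0 \<and> (\<forall>q\<in>frontier \<Omega> \<inter> ball p (fst \<epsilon>\<rho>). \<exists>n. norm n = 1 \<and>
           (\<forall>r'. 0 < r' \<and> r' \<le> snd \<epsilon>\<rho> \<longrightarrow> ball (q + r' *\<^sub>R n) r' \<inter> \<Omega> = {} \<and> ball (q - r' *\<^sub>R n) r' \<subseteq> \<Omega>))"
  proof
    fix p assume "p \<in> frontier \<Omega>"
    from local_balls[OF C2 this] obtain \<epsilon> \<rho> where "\<epsilon> > 0" "\<rho> > 0" "\<forall>q\<in>frontier \<Omega> \<inter> ball p \<epsilon>. \<exists>n. norm n = 1 \<and>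
           (\<forall>r'. 0 < r' \<and> r' \<le> \<rho> \<longrightarrow> ball (q + r' *\<^sub>R n) r' \<inter> \<Omega> = {} \<and> ball (q - r' *\<^sub>R n) r' \<subseteq> \<Omega>)"
      by blast
    then show "\<exists>\<epsilon>\<rho>. fst \<epsilon>\<rho> > 0 \<and> snd \<epsilon>\<rho> > 0 \<and> (\<forall>q\<in>frontier \<Omega> \<inter> ball p (fst \<epsilon>\<rho>). \<exists>n. norm n = 1 \<and>
           (\<forall>r'. 0 < r' \<and> r' \<le> snd \<epsilon>\<rho> \<longrightarrow> ball (q + r' *\<^sub>R n) r' \<inter> \<Omega> = {} \<and> ball (q - r' *\<^sub>R n) r' \<subseteq> \<Omega>))"
      by (intro exI[of _ "(\<epsilon>, \<rho>)"]) simp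
  qed
  from bchoice[OF this] obtain ER where ER: "\<And>p. p \<in> frontier \<Omega> \<Longrightarrow> fst (ER p) > 0 \<and> snd (ER p) > 0 \<and>
      (\<forall>q\<in>frontier \<Omega> \<inter> ball p (fst (ER p)). \<exists>n. norm n = 1 \<and>
           (\<forall>r'. 0 < r' \<and> r' \<le> snd (ER p) \<longrightarrow> ball (q + r' *\<^sub>R n) r' \<inter> \<Omega> = {} \<and> ball (q - r' *\<^sub>R n) r' \<subseteq> \<Omega>))"
    by blast
  have cpt: "compact (frontier \<Omega>)" using bd by (rule compact_frontier_bounded)
  have cov: "frontier \<Omega> \<subseteq> (\<Union>p\<in>frontier \<Omega>. ball p (fst (ER p)))"
    using ER by force
  obtain P where P: "P \<subseteq> frontier \<Omega>" "finite P" "frontier \<Omega> \<subseteq> (\<Union>p\<in>P. ball p (fst (ER p)))"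
    using compactE_image[OF cpt _ cov] by blast
  have Pne: "P \<noteq> {}" using P(3) False by blast
  define r where "r = Min ((\<lambda>p. snd (ER p)) ` P)"
  have r0: "r > 0" using P Pne ER by (auto simp: r_def)
  show ?thesis
  proof (rule that[OF r0])
    fix q assume q: "q \<in> frontier \<Omega>"
    then obtain p where p: "p \<in> P" "q \<in> ball p (fst (ER p))" using P(3) by blast
    have rp: "r \<le> snd (ER p)" using p P by (auto simp: r_def)
    from ER[of p] p P q obtain n where "norm n = 1"
      "\<forall>r'. 0 < r' \<and> r' \<le> snd (ER p) \<longrightarrow> ball (q + r' *\<^sub>R n) r' \<inter> \<Omega> = {} \<and> ball (q - r' *\<^sub>R n) r' \<subseteq> \<Omega>"
      by blast
    then show "\<exists>n. norm n = 1 \<and> ball (q + r *\<^sub>R n) r \<inter> \<Omega> = {} \<and> ball (q - r *\<^sub>R n) r \<subseteq> \<Omega>"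
      using r0 rp by blast
  qed
qed



lemma card_Zint:
  fixes lo hi :: real
  assumes "lo \<le> hi"
  shows "finite {z. z \<in> \<int> \<and> lo \<le> z \<and> z \<le> hi}"
    "real (card {z. z \<in> \<int> \<and> lo \<le> z \<and> z \<le> hi}) \<le> hi - lo + 1"
proof -
  have eq: "{z. z \<in> \<int> \<and> lo \<le> z \<and> z \<le> hi} = real_of_int ` {\<lceil>lo\<rceil>..\<lfloor>hi\<rfloor>}"
  proof
    show "{z. z \<in> \<int> \<and> lo \<le> z \<and> z \<le> hi} \<subseteq> real_of_int ` {\<lceil>lo\<rceil>..\<lfloor>hi\<rfloor>}"
    proof
      fix z assume z: "z \<in> {z. z \<in> \<int> \<and> lo \<le> z \<and> z \<le> hi}"
      then obtain i where i: "z = of_int i" by (auto elim: Ints_cases)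
      have "\<lceil>lo\<rceil> \<le> i" using z i by (simp add: ceiling_le_iff)
      moreover have "i \<le> \<lfloor>hi\<rfloor>" using z i by (simp add: le_floor_iff)
      ultimately show "z \<in> real_of_int ` {\<lceil>lo\<rceil>..\<lfloor>hi\<rfloor>}" using i by auto
    qed
    show "real_of_int ` {\<lceil>lo\<rceil>..\<lfloor>hi\<rfloor>} \<subseteq> {z. z \<in> \<int> \<and> lo \<le> z \<and> z \<le> hi}"
      by (auto simp: ceiling_le_iff le_floor_iff)
  qed
  show "finite {z. z \<in> \<int> \<and> lo \<le> z \<and> z \<le> hi}" by (simp add: eq)
  have "card {z. z \<in> \<int> \<and> lo \<le> z \<and> z \<le> hi} \<le> card {\<lceil>lo\<rceil>..\<lfloor>hi\<rfloor>}"
    unfolding eq by (rule card_image_le) simp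
  also have "\<dots> = nat (\<lfloor>hi\<rfloor> - \<lceil>lo\<rceil> + 1)" by simp
  finally have c: "real (card {z. z \<in> \<int> \<and> lo \<le> z \<and> z \<le> hi}) \<le> real (nat (\<lfloor>hi\<rfloor> - \<lceil>lo\<rceil> + 1))"
    by linarith
  have "real (nat (\<lfloor>hi\<rfloor> - \<lceil>lo\<rceil> + 1)) \<le> hi - lo + 1"
  proof (cases "\<lfloor>hi\<rfloor> - \<lceil>lo\<rceil> + 1 \<le> 0")
    case True then show ?thesis using assms by simp
  next
    case False
    then have "real (nat (\<lfloor>hi\<rfloor> - \<lceil>lo\<rceil> + 1)) = of_int \<lfloor>hi\<rfloor> - of_int \<lceil>lo\<rceil> + 1" by simp
    also have "\<dots> \<le> hi - lo + 1" using of_int_floor_le[of hi] le_of_int_ceiling[of lo] by linarith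
    finally show ?thesis .
  qed
  then show "real (card {z. z \<in> \<int> \<and> lo \<le> z \<and> z \<le> hi}) \<le> hi - lo + 1" using c by linarith
qed

lemma lattice_box:
  fixes V :: "'a::euclidean_space set" and lo hi :: "'a \<Rightarrow> real"
  assumes le: "\<And>b. b \<in> Basis \<Longrightarrow> lo b \<le> hi b"
    and V: "\<And>k. k \<in> V \<Longrightarrow> k \<in> int_pts \<and> (\<forall>b\<in>Basis. lo b \<le> k \<bullet> b \<and> k \<bullet> b \<le> hi b)"
  shows "finite V \<and> real (card V) \<le> (\<Prod>b\<in>Basis. hi b - lo b + 1)"
proof -
  define Z where "Z b = {z. z \<in> \<int> \<and> lo b \<le> z \<and> z \<le> hi b}" for b
  define g where "g k = restrict (\<lambda>b. k \<bullet> b) Basis" for k :: 'a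
  have inj: "inj_on g V"
  proof (rule inj_onI)
    fix k k' assume "k \<in> V" "k' \<in> V" "g k = g k'"
    then have "\<And>b. b \<in> Basis \<Longrightarrow> k \<bullet> b = k' \<bullet> b" unfolding g_def by (metis restrict_apply')
    then show "k = k'" by (rule euclidean_eqI)
  qed
  have sub: "g ` V \<subseteq> PiE Basis Z"
  proof
    fix y assume "y \<in> g ` V"
    then obtain k where k: "k \<in> V" "y = g k" by blast
    have "k \<bullet> b \<in> Z b" if "b \<in> Basis" for b
      using V[OF k(1)] that by (auto simp: Z_def int_pts_def)
    then show "y \<in> PiE Basis Z" using k by (auto simp: g_def)
  qed
  have fin: "finite (PiE Basis Z)" by (rule finite_PiE) (auto simp: Z_def card_Zint le)
  have finV: "finite V" using finite_imageD[OF finite_subset[OF sub fin] inj] .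
  have "card V = card (g ` V)" using card_image[OF inj] by simp
  also have "\<dots> \<le> card (PiE Basis Z)" by (rule card_mono[OF fin sub])
  also have "\<dots> = (\<Prod>b\<in>Basis. card (Z b))" by (simp add: card_PiE)
  finally have "real (card V) \<le> (\<Prod>b\<in>Basis. real (card (Z b)))"
    by (metis of_nat_le_iff of_nat_prod)
  also have "\<dots> \<le> (\<Prod>b\<in>Basis. hi b - lo b + 1)"
    by (rule prod_mono) (auto simp: Z_def card_Zint le)
  finally show ?thesis using finV by simp
qed

lemma mem_grid_cell:
  "x \<in> grid_cell h k \<longleftrightarrow> (\<forall>b\<in>Basis. h * (k \<bullet> b) \<le> x \<bullet> b \<and> x \<bullet> b \<le> h * (k \<bullet> b) + h)"
  by (simp add: grid_cell_def mem_box inner_add_left inner_sum_Basis algebra_simps)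

definition flr :: "real \<Rightarrow> 'a::euclidean_space \<Rightarrow> 'a" where
  "flr h x = (\<Sum>b\<in>Basis. of_int \<lfloor>(x \<bullet> b) / h\<rfloor> *\<^sub>R b)"

lemma flr_inner: "b \<in> Basis \<Longrightarrow> flr h x \<bullet> b = of_int \<lfloor>(x \<bullet> b) / h\<rfloor>"
  by (simp add: flr_def inner_sum_left_Basis)

lemma flr_int: "flr h x \<in> int_pts"
  by (simp add: int_pts_def flr_inner)

lemma flr_cell:
  assumes "h > 0" shows "x \<in> grid_cell h (flr h x)"
  unfolding mem_grid_cell
proof
  fix b :: 'a assume b: "b \<in> Basis"
  have fl: "of_int \<lfloor>(x \<bullet> b) / h\<rfloor> \<le> (x \<bullet> b) / h" by (rule of_int_floor_le)
  have 1: "h * of_int \<lfloor>(x \<bullet> b) / h\<rfloor> \<le> x \<bullet> b" using assms mult_left_mono[OF fl, of h] by simp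
  have "(x \<bullet> b) / h < of_int \<lfloor>(x \<bullet> b) / h\<rfloor> + 1" by (rule real_of_int_floor_add_one_gt)
  then have 2: "x \<bullet> b \<le> h * of_int \<lfloor>(x \<bullet> b) / h\<rfloor> + h" using assms by (simp add: field_simps)
  show "h * (flr h x \<bullet> b) \<le> x \<bullet> b \<and> x \<bullet> b \<le> h * (flr h x \<bullet> b) + h"
    using 1 2 by (simp add: flr_inner b)
qed

lemma measure_grid_cell:
  assumes "h > 0" shows "measure lebesgue (grid_cell h (k::'a::euclidean_space)) = h ^ DIM('a)"
proof -
  have "measure lebesgue (grid_cell h k) = measure lborel (grid_cell h k)"
    by (simp add: grid_cell_def)
  also have "\<dots> = (\<Prod>b\<in>(Basis::'a set). h)"
    using assms by (simp add: grid_cell_def measure_lborel_cbox_eq inner_add_left inner_diff_left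
        inner_sum_Basis algebra_simps)
  finally show ?thesis by simp
qed



lemma mem_cube:
  "x \<in> cbox (p - R *\<^sub>R One) (p + R *\<^sub>R One) \<longleftrightarrow> (\<forall>b\<in>Basis. p \<bullet> b - R \<le> x \<bullet> b \<and> x \<bullet> b \<le> p \<bullet> b + R)"
  by (simp add: mem_box inner_diff_left inner_add_left inner_sum_Basis)

lemma line_deriv:
  fixes \<phi> :: "'a::euclidean_space \<Rightarrow> real"
  assumes "(\<phi> has_derivative (\<lambda>v. D (x + \<tau> *\<^sub>R e) \<bullet> v)) (at (x + \<tau> *\<^sub>R e))"
  shows "((\<lambda>\<tau>. \<phi> (x + \<tau> *\<^sub>R e)) has_real_derivative (D (x + \<tau> *\<^sub>R e) \<bullet> e)) (at \<tau>)"
proof -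
  have l: "((\<lambda>\<tau>. x + \<tau> *\<^sub>R e) has_derivative (\<lambda>h. h *\<^sub>R e)) (at \<tau>)"
    by (auto intro!: derivative_eq_intros)
  have "((\<lambda>\<tau>. \<phi> (x + \<tau> *\<^sub>R e)) has_derivative (\<lambda>h. D (x + \<tau> *\<^sub>R e) \<bullet> (h *\<^sub>R e))) (at \<tau>)"
    using has_derivative_compose[OF l assms] by simp
  moreover have "(\<lambda>h. D (x + \<tau> *\<^sub>R e) \<bullet> (h *\<^sub>R e)) = (*) (D (x + \<tau> *\<^sub>R e) \<bullet> e)"
    by (auto simp: mult.commute)
  ultimately show ?thesis by (simp add: has_field_derivative_def)
qed

lemma mvt_line:
  fixes \<phi> :: "'a::euclidean_space \<Rightarrow> real"
  assumes seg: "\<And>\<tau>. min 0 t \<le> \<tau> \<Longrightarrow> \<tau> \<le> max 0 t \<Longrightarrow> x + \<tau> *\<^sub>R e \<in> B"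
    and d: "\<And>z. z \<in> B \<Longrightarrow> (\<phi> has_derivative (\<lambda>v. D z \<bullet> v)) (at z)"
    and mb: "\<And>z. z \<in> B \<Longrightarrow> m \<le> \<bar>D z \<bullet> e\<bar>"
  shows "m * \<bar>t\<bar> \<le> \<bar>\<phi> (x + t *\<^sub>R e) - \<phi> x\<bar>"
proof (cases "t = 0")
  case True then show ?thesis by simp
next
  case False
  define f where "f \<tau> = \<phi> (x + \<tau> *\<^sub>R e)" for \<tau>
  define f' where "f' \<tau> = D (x + \<tau> *\<^sub>R e) \<bullet> e" for \<tau>
  have der: "(f has_real_derivative f' \<tau>) (at \<tau>)" if "min 0 t \<le> \<tau>" "\<tau> \<le> max 0 t" for \<tau>
    unfolding f_def f'_def by (rule line_deriv) (rule d[OF seg[OF that]])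
  have lt: "min 0 t < max 0 t" using False by (auto simp: min_def max_def)
  obtain z where z: "min 0 t < z" "z < max 0 t" "f (max 0 t) - f (min 0 t) = (max 0 t - min 0 t) * f' z"
    using MVT2[OF lt der] by blast
  have mz: "m \<le> \<bar>f' z\<bar>" unfolding f'_def by (rule mb[OF seg]) (use z in auto)
  have "\<bar>f (max 0 t) - f (min 0 t)\<bar> = \<bar>t\<bar> * \<bar>f' z\<bar>"
    using z(3) by (auto simp: min_def max_def abs_mult)
  moreover have "\<bar>f (max 0 t) - f (min 0 t)\<bar> = \<bar>\<phi> (x + t *\<^sub>R e) - \<phi> x\<bar>"
    by (auto simp: min_def max_def f_def)
  ultimately show ?thesis using mz by (metis abs_ge_zero mult.commute mult_right_mono)
qed

lemma prod_if_one:
  fixes X :: real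
  assumes "b0 \<in> (Basis::'a::euclidean_space set)"
  shows "(\<Prod>b\<in>(Basis::'a set). if b = b0 then 1 else X) = X ^ (DIM('a) - 1)"
    "(\<Prod>b\<in>(Basis::'a set). if b = b0 then X else 1) = X"
proof -
  have "(\<Prod>b\<in>(Basis::'a set). if b = b0 then 1 else X) = (if b0 = b0 then 1 else X) * (\<Prod>b\<in>Basis - {b0}. if b = b0 then 1 else X)"
    using assms by (simp add: prod.remove)
  also have "(\<Prod>b\<in>Basis - {b0}. if b = b0 then 1 else X) = (\<Prod>b\<in>Basis - {b0}. X)"
    by (rule prod.cong) auto
  also have "\<dots> = X ^ (DIM('a) - 1)" using assms by (simp add: card_Diff_singleton)
  finally show "(\<Prod>b\<in>(Basis::'a set). if b = b0 then 1 else X) = X ^ (DIM('a) - 1)" by simp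
  show "(\<Prod>b\<in>(Basis::'a set). if b = b0 then X else 1) = X"
    using assms by (simp add: prod.delta')
qed



lemma tube_local:
  fixes \<phi> :: "'a::euclidean_space \<Rightarrow> real" and p :: 'a
  assumes R: "R > 0" and m: "m > 0" and b0: "b0 \<in> Basis"
    and d: "\<And>x. x \<in> cbox (p - R *\<^sub>R One) (p + R *\<^sub>R One) \<Longrightarrow> (\<phi> has_derivative (\<lambda>v. D x \<bullet> v)) (at x)"
    and Lb: "\<And>x. x \<in> cbox (p - R *\<^sub>R One) (p + R *\<^sub>R One) \<Longrightarrow> norm (D x) \<le> L"
    and mb: "\<And>x. x \<in> cbox (p - R *\<^sub>R One) (p + R *\<^sub>R One) \<Longrightarrow> m \<le> \<bar>D x \<bullet> b0\<bar>"
  shows "\<exists>C. \<forall>s A. 0 < s \<and> s \<le> 1 \<and> A \<in> sets lebesgue \<and>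
            A \<subseteq> {x \<in> cbox (p - R *\<^sub>R One) (p + R *\<^sub>R One). \<bar>\<phi> x\<bar> \<le> s} \<longrightarrow> measure lebesgue A \<le> C * s"
proof -
  define B where "B = cbox (p - R *\<^sub>R One) (p + R *\<^sub>R One)"
  define n where "n = DIM('a)"
  have n1: "n \<ge> 1" using DIM_positive[where 'a='a] by (simp add: n_def)
  have pB: "p \<in> B" using R by (simp add: B_def mem_cube)
  have L0: "0 \<le> L" using Lb[of p] pB norm_ge_zero[of "D p"] unfolding B_def by linarith
  define Qc where "Qc = (L * real n + 2) / m + 1"
  have Qc0: "Qc \<ge> 0" using L0 m by (simp add: Qc_def)
  define C where "C = (2*R + 2) ^ (n - 1) * (2*Qc + 1)"
  show ?thesis
  proof (intro exI[of _ C] allI impI)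
    fix s A assume H: "0 < s \<and> s \<le> 1 \<and> A \<in> sets lebesgue \<and>
            A \<subseteq> {x \<in> cbox (p - R *\<^sub>R One) (p + R *\<^sub>R One). \<bar>\<phi> x\<bar> \<le> s}"
    then have s: "0 < s" "s \<le> 1" and Aleb: "A \<in> sets lebesgue" and AB: "A \<subseteq> {x\<in>B. \<bar>\<phi> x\<bar> \<le> s}"
      by (auto simp: B_def)
    define A' where "A' = {x\<in>B. \<bar>\<phi> x\<bar> \<le> s}"
    define I where "I = {k. k \<in> int_pts \<and> grid_cell s k \<inter> A' \<noteq> {}}"
    have lohi: "(p \<bullet> b - R)/s - 1 \<le> (p \<bullet> b + R)/s" for b :: 'a
    proof -
      have "(p \<bullet> b - R)/s \<le> (p \<bullet> b + R)/s" using R s by (intro divide_right_mono) auto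
      then show ?thesis by linarith
    qed
    have kbd: "(p \<bullet> b - R)/s - 1 \<le> k \<bullet> b \<and> k \<bullet> b \<le> (p \<bullet> b + R)/s" if kI: "k \<in> I" and bB: "b \<in> Basis" for k b
    proof -
      obtain x where x: "x \<in> grid_cell s k" "x \<in> B" using kI unfolding I_def A'_def by blast
      have 1: "s * (k \<bullet> b) \<le> x \<bullet> b" "x \<bullet> b \<le> s * (k \<bullet> b) + s" using x(1) bB by (auto simp: mem_grid_cell)
      have 2: "p \<bullet> b - R \<le> x \<bullet> b" "x \<bullet> b \<le> p \<bullet> b + R" using x(2) bB by (auto simp: B_def mem_cube)
      have "k \<bullet> b \<le> (p \<bullet> b + R)/s" using 1 2 s by (simp add: le_divide_eq mult.commute)
      moreover have "(p \<bullet> b - R)/s \<le> k \<bullet> b + 1" using 1 2 s by (simp add: divide_le_eq algebra_simps)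
      ultimately show ?thesis by simp
    qed
    have finI: "finite I"
      using lattice_box[of "\<lambda>b. (p \<bullet> b - R)/s - 1" "\<lambda>b. (p \<bullet> b + R)/s" I] kbd lohi
      by (auto simp: I_def)
    have fib: "\<bar>k \<bullet> b0 - k' \<bullet> b0\<bar> \<le> Qc"
      if kk: "k \<in> I" "k' \<in> I" and same: "\<And>b. b \<in> Basis \<Longrightarrow> b \<noteq> b0 \<Longrightarrow> k \<bullet> b = k' \<bullet> b" for k k'
    proof -
      obtain x where x: "x \<in> grid_cell s k" "x \<in> B" "\<bar>\<phi> x\<bar> \<le> s" using kk(1) unfolding I_def A'_def by blast
      obtain x' where x': "x' \<in> grid_cell s k'" "x' \<in> B" "\<bar>\<phi> x'\<bar> \<le> s" using kk(2) unfolding I_def A'_def by blast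
      define t where "t = x' \<bullet> b0 - x \<bullet> b0"
      define y where "y = x + t *\<^sub>R b0"
      have xb: "p \<bullet> b - R \<le> x \<bullet> b \<and> x \<bullet> b \<le> p \<bullet> b + R" if "b \<in> Basis" for b
        using x(2) that by (auto simp: B_def mem_cube)
      have x'b: "p \<bullet> b - R \<le> x' \<bullet> b \<and> x' \<bullet> b \<le> p \<bullet> b + R" if "b \<in> Basis" for b
        using x'(2) that by (auto simp: B_def mem_cube)
      have seg: "x + \<tau> *\<^sub>R b0 \<in> B" if "min 0 t \<le> \<tau>" "\<tau> \<le> max 0 t" for \<tau>
        unfolding B_def mem_cube
      proof
        fix b :: 'a assume b: "b \<in> Basis"
        show "p \<bullet> b - R \<le> (x + \<tau> *\<^sub>R b0) \<bullet> b \<and> (x + \<tau> *\<^sub>R b0) \<bullet> b \<le> p \<bullet> b + R"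
        proof (cases "b = b0")
          case True
          then have "(x + \<tau> *\<^sub>R b0) \<bullet> b = x \<bullet> b0 + \<tau>" using b0 by (simp add: inner_add_left)
          then show ?thesis using xb[OF b] x'b[OF b] that True by (auto simp: t_def min_def max_def split: if_splits)
        next
          case False
          then have "(x + \<tau> *\<^sub>R b0) \<bullet> b = x \<bullet> b" using b0 b by (simp add: inner_add_left inner_Basis)
          then show ?thesis using xb[OF b] by simp
        qed
      qed
      have yB: "y \<in> B" using seg[of t] by (simp add: y_def)
      have mv: "m * \<bar>t\<bar> \<le> \<bar>\<phi> y - \<phi> x\<bar>"
        unfolding y_def by (rule mvt_line[OF seg]) (auto simp: B_def intro: d mb)
      have cx: "s * (k \<bullet> b) \<le> x \<bullet> b \<and> x \<bullet> b \<le> s * (k \<bullet> b) + s" if "b \<in> Basis" for b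
        using x(1) that by (auto simp: mem_grid_cell)
      have cx': "s * (k' \<bullet> b) \<le> x' \<bullet> b \<and> x' \<bullet> b \<le> s * (k' \<bullet> b) + s" if "b \<in> Basis" for b
        using x'(1) that by (auto simp: mem_grid_cell)
      have nrm: "norm (x' - y) \<le> real n * s"
      proof -
        have "norm (x' - y) \<le> (\<Sum>b\<in>Basis. \<bar>(x' - y) \<bullet> b\<bar>)" by (rule norm_le_l1)
        also have "\<dots> \<le> (\<Sum>b\<in>(Basis::'a set). s)"
        proof (rule sum_mono)
          fix b :: 'a assume b: "b \<in> Basis"
          show "\<bar>(x' - y) \<bullet> b\<bar> \<le> s"
          proof (cases "b = b0")
            case True
            then have "(x' - y) \<bullet> b = 0" using b0 by (simp add: y_def t_def inner_diff_left inner_add_left)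
            then show ?thesis using s by simp
          next
            case False
            then have "(x' - y) \<bullet> b = x' \<bullet> b - x \<bullet> b" using b0 b
              by (simp add: y_def inner_diff_left inner_add_left inner_Basis)
            moreover have "k \<bullet> b = k' \<bullet> b" using same b False by blast
            ultimately show ?thesis using cx[OF b] cx'[OF b] by auto
          qed
        qed
        also have "\<dots> = real n * s" by (simp add: n_def)
        finally show ?thesis .
      qed
      have lip: "norm (\<phi> x' - \<phi> y) \<le> L * norm (x' - y)"
      proof (rule differentiable_bound[of B \<phi> "\<lambda>z v. D z \<bullet> v" L x' y])
        show "convex B" by (simp add: B_def convex_box)
        show "(\<phi> has_derivative (\<lambda>v. D z \<bullet> v)) (at z within B)" if "z \<in> B" for z
          using d[of z] that by (simp add: B_def has_derivative_at_withinI)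
        show "onorm (\<lambda>v. D z \<bullet> v) \<le> L" if "z \<in> B" for z
        proof (rule onorm_le)
          fix v
          have "norm (D z \<bullet> v) \<le> norm (D z) * norm v" using Cauchy_Schwarz_ineq2 by simp
          also have "\<dots> \<le> L * norm v" using Lb[of z] that by (simp add: B_def mult_right_mono)
          finally show "norm (D z \<bullet> v) \<le> L * norm v" .
        qed
        show "x' \<in> B" "y \<in> B" using x'(2) yB by auto
      qed
      have "\<bar>\<phi> y - \<phi> x\<bar> \<le> \<bar>\<phi> x' - \<phi> y\<bar> + \<bar>\<phi> x'\<bar> + \<bar>\<phi> x\<bar>" by linarith
      also have "\<dots> \<le> L * (real n * s) + s + s"
        using lip nrm x(3) x'(3) L0 mult_left_mono[OF nrm L0] by simp
      finally have mt: "m * \<bar>t\<bar> \<le> (L * real n + 2) * s" using mv by (simp add: algebra_simps)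
      have e1: "s * \<bar>k \<bullet> b0 - k' \<bullet> b0\<bar> = \<bar>s * (k \<bullet> b0) - s * (k' \<bullet> b0)\<bar>"
        using s by (metis abs_mult abs_of_pos right_diff_distrib)
      have sk: "s * \<bar>k \<bullet> b0 - k' \<bullet> b0\<bar> \<le> \<bar>t\<bar> + s"
        using e1 cx[OF b0] cx'[OF b0] unfolding t_def by arith
      have "m * (s * \<bar>k \<bullet> b0 - k' \<bullet> b0\<bar>) \<le> m * (\<bar>t\<bar> + s)" using sk m by simp
      also have "\<dots> \<le> (L * real n + 2) * s + m * s" using mt by (simp add: algebra_simps)
      finally have "s * (m * \<bar>k \<bullet> b0 - k' \<bullet> b0\<bar>) \<le> s * (L * real n + 2 + m)" by (simp add: algebra_simps)
      then have "m * \<bar>k \<bullet> b0 - k' \<bullet> b0\<bar> \<le> L * real n + 2 + m" using s by simp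
      then have "\<bar>k \<bullet> b0 - k' \<bullet> b0\<bar> \<le> (L * real n + 2 + m) / m" using m by (simp add: le_divide_eq mult.commute)
      also have "\<dots> = Qc" using m by (simp add: Qc_def add_divide_distrib)
      finally show ?thesis .
    qed
    define col where "col k = k - (k \<bullet> b0) *\<^sub>R b0" for k :: 'a
    have colb: "col k \<bullet> b = (if b = b0 then 0 else k \<bullet> b)" if "b \<in> Basis" for k b
      using that b0 by (auto simp: col_def inner_diff_left inner_Basis)
    have colI: "finite (col ` I) \<and> real (card (col ` I)) \<le> (2*R/s + 2) ^ (n - 1)"
    proof -
      have "finite (col ` I) \<and> real (card (col ` I)) \<le>
        (\<Prod>b\<in>Basis. (if b = b0 then 0 else (p \<bullet> b + R)/s) - (if b = b0 then 0 else (p \<bullet> b - R)/s - 1) + 1)"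
      proof (rule lattice_box)
        show "(if b = b0 then 0 else (p \<bullet> b - R)/s - 1) \<le> (if b = b0 then 0 else (p \<bullet> b + R)/s)" for b
          using lohi by simp
        fix c assume "c \<in> col ` I"
        then obtain k where k: "k \<in> I" "c = col k" by blast
        have "c \<in> int_pts" using k colb by (auto simp: int_pts_def I_def)
        moreover have "\<forall>b\<in>Basis. (if b = b0 then 0 else (p \<bullet> b - R)/s - 1) \<le> c \<bullet> b \<and>
                   c \<bullet> b \<le> (if b = b0 then 0 else (p \<bullet> b + R)/s)"
          using k kbd colb by auto
        ultimately show "c \<in> int_pts \<and> (\<forall>b\<in>Basis. (if b = b0 then 0 else (p \<bullet> b - R)/s - 1) \<le> c \<bullet> b \<and>
                   c \<bullet> b \<le> (if b = b0 then 0 else (p \<bullet> b + R)/s))" by blast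
      qed
      also have "(\<Prod>b\<in>Basis. (if b = b0 then 0 else (p \<bullet> b + R)/s) - (if b = b0 then 0 else (p \<bullet> b - R)/s - 1) + 1)
          = (\<Prod>b\<in>(Basis::'a set). if b = b0 then 1 else 2*R/s + 2)"
        by (rule prod.cong) (auto simp: diff_divide_distrib add_divide_distrib)
      also have "\<dots> = (2*R/s + 2) ^ (n - 1)" using prod_if_one(1)[OF b0] by (simp add: n_def)
      finally show ?thesis by blast
    qed
    have fibI: "real (card {k\<in>I. col k = c}) \<le> 2*Qc + 1" if cI: "c \<in> col ` I" for c
    proof -
      obtain k0 where k0: "k0 \<in> I" "c = col k0" using cI by blast
      have "finite {k\<in>I. col k = c} \<and> real (card {k\<in>I. col k = c}) \<le>
         (\<Prod>b\<in>Basis. (if b = b0 then k0 \<bullet> b0 + Qc else c \<bullet> b) - (if b = b0 then k0 \<bullet> b0 - Qc else c \<bullet> b) + 1)"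
      proof (rule lattice_box)
        show "(if b = b0 then k0 \<bullet> b0 - Qc else c \<bullet> b) \<le> (if b = b0 then k0 \<bullet> b0 + Qc else c \<bullet> b)" for b
          using Qc0 by simp
        fix k assume k: "k \<in> {k\<in>I. col k = c}"
        have oth: "k \<bullet> b = c \<bullet> b" if "b \<in> Basis" "b \<noteq> b0" for b
          using k colb[OF that(1), of k] that by auto
        have oth0: "k0 \<bullet> b = c \<bullet> b" if "b \<in> Basis" "b \<noteq> b0" for b
          using k0 colb[OF that(1), of k0] that by auto
        have "\<bar>k \<bullet> b0 - k0 \<bullet> b0\<bar> \<le> Qc"
          by (rule fib) (use k k0 oth oth0 in auto)
        then show "k \<in> int_pts \<and> (\<forall>b\<in>Basis. (if b = b0 then k0 \<bullet> b0 - Qc else c \<bullet> b) \<le> k \<bullet> b \<and>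
                   k \<bullet> b \<le> (if b = b0 then k0 \<bullet> b0 + Qc else c \<bullet> b))"
          using k oth by (auto simp: I_def abs_le_iff)
      qed
      also have "(\<Prod>b\<in>Basis. (if b = b0 then k0 \<bullet> b0 + Qc else c \<bullet> b) - (if b = b0 then k0 \<bullet> b0 - Qc else c \<bullet> b) + 1)
          = (\<Prod>b\<in>(Basis::'a set). if b = b0 then 2*Qc + 1 else 1)"
        by (rule prod.cong) auto
      also have "\<dots> = 2*Qc + 1" using prod_if_one(2)[OF b0] by simp
      finally show ?thesis by blast
    qed
    have cardI: "real (card I) \<le> (2*R/s + 2) ^ (n - 1) * (2*Qc + 1)"
    proof -
      have "I = (\<Union>c\<in>col ` I. {k\<in>I. col k = c})" by auto
      then have "card I \<le> (\<Sum>c\<in>col ` I. card {k\<in>I. col k = c})"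
        using card_UN_le[of "col ` I" "\<lambda>c. {k\<in>I. col k = c}"] colI by simp
      then have "real (card I) \<le> (\<Sum>c\<in>col ` I. real (card {k\<in>I. col k = c}))"
        by (metis of_nat_le_iff of_nat_sum)
      also have "\<dots> \<le> (\<Sum>c\<in>col ` I. 2*Qc + 1)" by (rule sum_mono) (rule fibI)
      also have "\<dots> = real (card (col ` I)) * (2*Qc + 1)" by simp
      also have "\<dots> \<le> (2*R/s + 2) ^ (n - 1) * (2*Qc + 1)"
        using colI Qc0 by (intro mult_right_mono) auto
      finally show ?thesis .
    qed
    have cov: "A \<subseteq> (\<Union>k\<in>I. grid_cell s k)"
    proof
      fix x assume "x \<in> A"
      then have "x \<in> A'" using AB by (auto simp: A'_def)
      moreover have "x \<in> grid_cell s (flr s x)" using flr_cell s by blast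
      ultimately have "flr s x \<in> I" using flr_int by (auto simp: I_def)
      then show "x \<in> (\<Union>k\<in>I. grid_cell s k)" using \<open>x \<in> grid_cell s (flr s x)\<close> by blast
    qed
    have fm: "(\<Union>k\<in>I. grid_cell s k) \<in> fmeasurable lebesgue"
      by (rule fmeasurable.finite_UN[OF finI]) (simp add: grid_cell_def)
    have "measure lebesgue A \<le> measure lebesgue (\<Union>k\<in>I. grid_cell s k)"
      by (rule measure_mono_fmeasurable[OF cov Aleb fm])
    also have "\<dots> \<le> (\<Sum>k\<in>I. measure lebesgue (grid_cell s k))"
      by (rule measure_UNION_le[OF finI]) (simp add: grid_cell_def fmeasurableD)
    also have "\<dots> = real (card I) * s ^ n" using measure_grid_cell[OF s(1), where 'a='a] by (simp add: n_def)
    also have "\<dots> \<le> (2*R/s + 2) ^ (n - 1) * (2*Qc + 1) * s ^ n"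
      using cardI s by (intro mult_right_mono) auto
    also have "\<dots> = (2*R + 2* s) ^ (n - 1) * (2*Qc + 1) * s"
    proof -
      have sn: "s ^ n = s ^ (n - 1) * s" using n1 by (metis power_minus_mult le_numeral_extra(2) not_one_le_zero neq0_conv)
      have "(2*R/s + 2) ^ (n - 1) * s ^ (n - 1) = (2*R + 2* s) ^ (n - 1)"
        using s by (simp add: power_mult_distrib[symmetric] field_simps)
      then show ?thesis using sn by (simp add: algebra_simps)
    qed
    also have "\<dots> \<le> C * s"
    proof -
      have "(2*R + 2* s) ^ (n - 1) \<le> (2*R + 2) ^ (n - 1)" using s R by (intro power_mono) auto
      then show ?thesis unfolding C_def using s Qc0 by (intro mult_right_mono) auto
    qed
    finally show "measure lebesgue A \<le> C * s" .
  qed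
qed



lemma chart_zero:
  fixes \<phi> :: "'a::euclidean_space \<Rightarrow> real"
  assumes opn: "open \<Omega>" and U: "open U" and U\<Omega>: "\<Omega> \<inter> U = {x\<in>U. \<phi> x < 0}"
    and c\<phi>: "continuous_on U \<phi>" and q: "q \<in> frontier \<Omega>" "q \<in> U"
  shows "\<phi> q = 0"
proof -
  have qnot: "q \<notin> \<Omega>" using q open_frontier_disj[OF opn] by blast
  have "\<phi> q \<ge> 0" using qnot q U\<Omega> by force
  moreover have "\<phi> q \<le> 0"
  proof (rule ccontr)
    assume "\<not> \<phi> q \<le> 0"
    define V where "V = {x\<in>U. \<phi> x > 0}"
    have "open V"
      using continuous_open_preimage[OF c\<phi> U, of "{0<..}"] by (auto simp: V_def vimage_def Int_def)
    moreover have "q \<in> V" using q \<open>\<not> \<phi> q \<le> 0\<close> by (simp add: V_def)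
    moreover have "V \<inter> \<Omega> = {}"
    proof -
      have "x \<notin> \<Omega>" if "x \<in> V" for x
      proof
        assume "x \<in> \<Omega>"
        then have "x \<in> \<Omega> \<inter> U" using that by (simp add: V_def)
        then have "\<phi> x < 0" using U\<Omega> by blast
        then show False using that by (simp add: V_def)
      qed
      then show ?thesis by blast
    qed
    moreover have "q \<in> closure \<Omega>" using q by (simp add: frontier_def)
    ultimately show False using open_Int_closure_eq_empty by blast
  qed
  ultimately show ?thesis by simp
qed

lemma cube_sub_ball:
  fixes p :: "'a::euclidean_space"
  assumes "2 * R * real DIM('a) < e" "R > 0"
  shows "cbox (p - (2*R) *\<^sub>R One) (p + (2*R) *\<^sub>R One) \<subseteq> ball p e"
proof
  fix x assume x: "x \<in> cbox (p - (2*R) *\<^sub>R One) (p + (2*R) *\<^sub>R One)"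
  have "norm (x - p) \<le> (\<Sum>b\<in>Basis. \<bar>(x - p) \<bullet> b\<bar>)" by (rule norm_le_l1)
  also have "\<dots> \<le> (\<Sum>b\<in>(Basis::'a set). 2*R)"
    apply (rule sum_mono) using x by (auto simp: mem_cube inner_diff_left abs_le_iff)
  also have "\<dots> = 2 * R * real DIM('a)" by simp
  finally show "x \<in> ball p e" using assms by (simp add: dist_norm norm_minus_commute)
qed

lemma closed_tube: "closed {x. infdist x A \<le> \<eta>}"
  by (rule closed_Collect_le) (auto intro: continuous_intros)

lemma tube_near:
  fixes \<Omega> :: "'a::euclidean_space set"
  assumes C2: "C2_boundary \<Omega>" and p: "p \<in> frontier \<Omega>"
  shows "\<exists>\<rho>>0. \<exists>C. \<exists>\<delta>1>0. \<forall>\<eta>. 0 < \<eta> \<and> \<eta> \<le> \<delta>1 \<longrightarrow>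
          measure lebesgue ({x. infdist x (frontier \<Omega>) \<le> \<eta>} \<inter> cball p \<rho>) \<le> C * \<eta>"
proof -
  have opn: "open \<Omega>" using C2_open[OF C2] .
  obtain U \<phi> D1 D2 where U: "open U" "p \<in> U" and U\<Omega>: "\<Omega> \<inter> U = {x\<in>U. \<phi> x < 0}"
    and d1: "\<And>x. x\<in>U \<Longrightarrow> (\<phi> has_derivative (\<lambda>v. D1 x \<bullet> v)) (at x)"
    and d2: "\<And>x. x\<in>U \<Longrightarrow> (D1 has_derivative blinfun_apply (D2 x)) (at x)"
    and c2: "continuous_on U D2" and nz: "\<And>x. x\<in>U \<Longrightarrow> D1 x \<noteq> 0"
    by (rule C2_chart[OF C2 p], rule that)
  have cD1: "continuous_on U D1"
    by (meson d2 has_derivative_continuous continuous_at_imp_continuous_on)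
  have c\<phi>: "continuous_on U \<phi>"
    by (meson d1 has_derivative_continuous continuous_at_imp_continuous_on)
  obtain b0 where b0: "b0 \<in> Basis" "D1 p \<bullet> b0 \<noteq> 0"
    using nz[OF U(2)] euclidean_all_zero_iff[of "D1 p"] by blast
  define \<mu> where "\<mu> = \<bar>D1 p \<bullet> b0\<bar> / 2"
  have \<mu>0: "\<mu> > 0" using b0 by (simp add: \<mu>_def)
  have cb: "continuous_on U (\<lambda>x. D1 x \<bullet> b0)" by (intro continuous_intros cD1)
  obtain e1 where e1: "e1 > 0" "\<And>x'. x' \<in> U \<Longrightarrow> dist x' p < e1 \<Longrightarrow> dist (D1 x' \<bullet> b0) (D1 p \<bullet> b0) < \<mu>"
    using cb U(2) \<mu>0 unfolding continuous_on_iff by metis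
  obtain e2 where e2: "e2 > 0" "ball p e2 \<subseteq> U" using U open_contains_ball by blast
  define e where "e = min e1 e2"
  have e0: "e > 0" using e1 e2 by (simp add: e_def)
  define n where "n = real DIM('a)"
  have n0: "n > 0" by (simp add: n_def)
  define R where "R = e / (4 * n)"
  have R0: "R > 0" using e0 n0 by (simp add: R_def)
  define B2 where "B2 = cbox (p - (2*R) *\<^sub>R One) (p + (2*R) *\<^sub>R One)"
  have B2e: "B2 \<subseteq> ball p e"
    unfolding B2_def by (rule cube_sub_ball) (use e0 n0 R0 in \<open>simp_all add: R_def n_def field_simps\<close>)
  have "ball p e \<subseteq> ball p e2" by (rule subset_ball) (simp add: e_def)
  then have B2U: "B2 \<subseteq> U" using B2e e2 by blast
  have mb: "\<mu> \<le> \<bar>D1 x \<bullet> b0\<bar>" if "x \<in> B2" for x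
  proof -
    have "x \<in> U" "dist x p < e1" using that B2U B2e by (auto simp: e_def dist_commute)
    then have "dist (D1 x \<bullet> b0) (D1 p \<bullet> b0) < \<mu>" using e1 by blast
    then show ?thesis unfolding \<mu>_def dist_real_def by arith
  qed
  have "compact ((\<lambda>x. norm (D1 x)) ` B2)"
  proof (rule compact_continuous_image)
    show "continuous_on B2 (\<lambda>x. norm (D1 x))" using continuous_on_subset[OF cD1 B2U] by (rule continuous_on_norm)
    show "compact B2" by (simp add: B2_def)
  qed
  then have "bounded ((\<lambda>x. norm (D1 x)) ` B2)" by (rule compact_imp_bounded)
  then obtain L0 where L0: "\<forall>y\<in>(\<lambda>x. norm (D1 x)) ` B2. norm y \<le> L0" unfolding bounded_iff by blast
  define L where "L = max L0 1"
  have L1: "L \<ge> 1" by (simp add: L_def)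
  have Lb: "norm (D1 x) \<le> L" if "x \<in> B2" for x using L0 that by (force simp: L_def)
  obtain C0 where C0: "\<forall>s A. 0 < s \<and> s \<le> 1 \<and> A \<in> sets lebesgue \<and>
            A \<subseteq> {x \<in> B2. \<bar>\<phi> x\<bar> \<le> s} \<longrightarrow> measure lebesgue A \<le> C0 * s"
  proof -
    have "\<exists>C. \<forall>s A. 0 < s \<and> s \<le> 1 \<and> A \<in> sets lebesgue \<and>
            A \<subseteq> {x \<in> cbox (p - (2*R) *\<^sub>R One) (p + (2*R) *\<^sub>R One). \<bar>\<phi> x\<bar> \<le> s} \<longrightarrow> measure lebesgue A \<le> C * s"
    proof (rule tube_local)
      show "0 < 2*R" using R0 by simp
      show "0 < \<mu>" by (rule \<mu>0)
      show "b0 \<in> Basis" by (rule b0(1))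
      show "(\<phi> has_derivative (\<lambda>v. D1 x \<bullet> v)) (at x)" if "x \<in> cbox (p - (2*R) *\<^sub>R One) (p + (2*R) *\<^sub>R One)" for x
        using d1 B2U that unfolding B2_def by blast
      show "norm (D1 x) \<le> L" if "x \<in> cbox (p - (2*R) *\<^sub>R One) (p + (2*R) *\<^sub>R One)" for x
        using Lb that unfolding B2_def by blast
      show "\<mu> \<le> \<bar>D1 x \<bullet> b0\<bar>" if "x \<in> cbox (p - (2*R) *\<^sub>R One) (p + (2*R) *\<^sub>R One)" for x
        using mb that unfolding B2_def by blast
    qed
    then show ?thesis using that unfolding B2_def by blast
  qed
  define \<delta>1 where "\<delta>1 = min R (1 / L)"
  have \<delta>10: "\<delta>1 > 0" using R0 L1 by (simp add: \<delta>1_def)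
  show ?thesis
  proof (rule exI[of _ R], intro conjI R0, rule exI[of _ "C0 * L"], rule exI[of _ \<delta>1], intro conjI \<delta>10 allI impI)
    fix \<eta> :: real assume \<eta>: "0 < \<eta> \<and> \<eta> \<le> \<delta>1"
    define A where "A = {x. infdist x (frontier \<Omega>) \<le> \<eta>} \<inter> cball p R"
    have Acpt: "compact A" unfolding A_def by (intro closed_Int_compact closed_tube compact_cball)
    have Aleb: "A \<in> sets lebesgue" using lmeasurable_compact[OF Acpt] by (simp add: fmeasurableD)
    have Fne: "frontier \<Omega> \<noteq> {}" using p by blast
    have Asub: "A \<subseteq> {x \<in> B2. \<bar>\<phi> x\<bar> \<le> L * \<eta>}"
    proof
      fix x assume x: "x \<in> A"
      obtain q where q: "q \<in> frontier \<Omega>" "infdist x (frontier \<Omega>) = dist x q"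
        using infdist_attains_inf[OF frontier_closed Fne] by blast
      have dxq: "dist x q \<le> \<eta>" using x q by (simp add: A_def)
      have dxp: "dist p x \<le> R" using x by (simp add: A_def)
      have \<eta>R: "\<eta> \<le> R" using \<eta> by (simp add: \<delta>1_def)
      have xB: "x \<in> B2" unfolding B2_def mem_cube
      proof
        fix b :: 'a assume b: "b \<in> Basis"
        have "\<bar>(x - p) \<bullet> b\<bar> \<le> norm (x - p)" by (rule Basis_le_norm[OF b])
        then show "p \<bullet> b - 2 * R \<le> x \<bullet> b \<and> x \<bullet> b \<le> p \<bullet> b + 2 * R"
          using dxp R0 by (auto simp: dist_norm norm_minus_commute inner_diff_left abs_le_iff)
      qed
      have qB: "q \<in> B2" unfolding B2_def mem_cube
      proof
        fix b :: 'a assume b: "b \<in> Basis"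
        have "\<bar>(x - p) \<bullet> b\<bar> \<le> norm (x - p)" by (rule Basis_le_norm[OF b])
        moreover have "\<bar>(q - x) \<bullet> b\<bar> \<le> norm (q - x)" by (rule Basis_le_norm[OF b])
        ultimately show "p \<bullet> b - 2 * R \<le> q \<bullet> b \<and> q \<bullet> b \<le> p \<bullet> b + 2 * R"
          using dxp dxq \<eta>R by (auto simp: dist_norm norm_minus_commute inner_diff_left abs_le_iff)
      qed
      have \<phi>q: "\<phi> q = 0" using chart_zero[OF opn U(1) U\<Omega> c\<phi> q(1)] qB B2U by blast
      have "norm (\<phi> x - \<phi> q) \<le> L * norm (x - q)"
      proof (rule differentiable_bound[of B2 \<phi> "\<lambda>z v. D1 z \<bullet> v" L x q])
        show "convex B2" by (simp add: B2_def convex_box)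
        show "(\<phi> has_derivative (\<lambda>v. D1 z \<bullet> v)) (at z within B2)" if "z \<in> B2" for z
          using d1[of z] that B2U by (auto intro: has_derivative_at_withinI)
        show "onorm (\<lambda>v. D1 z \<bullet> v) \<le> L" if "z \<in> B2" for z
        proof (rule onorm_le)
          fix v
          have "norm (D1 z \<bullet> v) \<le> norm (D1 z) * norm v" using Cauchy_Schwarz_ineq2 by simp
          also have "\<dots> \<le> L * norm v" using Lb[OF that] by (simp add: mult_right_mono)
          finally show "norm (D1 z \<bullet> v) \<le> L * norm v" .
        qed
        show "x \<in> B2" "q \<in> B2" using xB qB by auto
      qed
      then have "\<bar>\<phi> x\<bar> \<le> L * \<eta>" using \<phi>q dxq L1
        by (simp add: dist_norm) (meson mult_left_mono order_trans zero_le_one)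
      then show "x \<in> {x \<in> B2. \<bar>\<phi> x\<bar> \<le> L * \<eta>}" using xB by simp
    qed
    have "L * \<eta> \<le> 1"
    proof -
      have "\<eta> \<le> 1 / L" using \<eta> by (simp add: \<delta>1_def)
      then show ?thesis using L1 by (simp add: field_simps)
    qed
    moreover have "0 < L * \<eta>" using L1 \<eta> by simp
    ultimately have "measure lebesgue A \<le> C0 * (L * \<eta>)" using C0 Aleb Asub by blast
    then show "measure lebesgue ({x. infdist x (frontier \<Omega>) \<le> \<eta>} \<inter> cball p R) \<le> C0 * L * \<eta>"
      by (simp add: A_def mult.assoc)
  qed
qed



lemma tube_estimate:
  fixes \<Omega> :: "'a::euclidean_space set"
  assumes bd: "bounded \<Omega>" and C2: "C2_boundary \<Omega>" and Fne: "frontier \<Omega> \<noteq> {}"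
  shows "\<exists>C \<delta>0. \<delta>0 > 0 \<and> (\<forall>\<eta>. 0 < \<eta> \<and> \<eta> \<le> \<delta>0 \<longrightarrow>
            measure lebesgue {x. infdist x (frontier \<Omega>) \<le> \<eta>} \<le> C * \<eta>)"
proof -
  define F where "F = frontier \<Omega>"
  define T where "T \<eta> = {x. infdist x F \<le> \<eta>}" for \<eta>
  have "\<forall>p\<in>F. \<exists>t. fst t > 0 \<and> snd (snd t) > 0 \<and> (\<forall>\<eta>. 0 < \<eta> \<and> \<eta> \<le> snd (snd t) \<longrightarrow>
          measure lebesgue (T \<eta> \<inter> cball p (fst t)) \<le> fst (snd t) * \<eta>)"
  proof
    fix p assume "p \<in> F"
    then have "p \<in> frontier \<Omega>" by (simp add: F_def)
    from tube_near[OF C2 this] obtain \<rho> C \<delta>1 where "\<rho> > 0" "\<delta>1 > 0"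
      "\<forall>\<eta>. 0 < \<eta> \<and> \<eta> \<le> \<delta>1 \<longrightarrow> measure lebesgue ({x. infdist x (frontier \<Omega>) \<le> \<eta>} \<inter> cball p \<rho>) \<le> C * \<eta>"
      by blast
    then show "\<exists>t. fst t > 0 \<and> snd (snd t) > 0 \<and> (\<forall>\<eta>. 0 < \<eta> \<and> \<eta> \<le> snd (snd t) \<longrightarrow>
          measure lebesgue (T \<eta> \<inter> cball p (fst t)) \<le> fst (snd t) * \<eta>)"
      by (intro exI[of _ "(\<rho>, C, \<delta>1)"]) (simp add: T_def F_def)
  qed
  from bchoice[OF this] obtain t where t: "\<forall>p\<in>F. fst (t p) > 0 \<and> snd (snd (t p)) > 0 \<and>
      (\<forall>\<eta>. 0 < \<eta> \<and> \<eta> \<le> snd (snd (t p)) \<longrightarrow>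
          measure lebesgue (T \<eta> \<inter> cball p (fst (t p))) \<le> fst (snd (t p)) * \<eta>)"
    by blast
  define \<rho> where "\<rho> p = fst (t p)" for p
  define Cp where "Cp p = fst (snd (t p))" for p
  define \<delta>p where "\<delta>p p = snd (snd (t p))" for p
  have tp: "\<rho> p > 0 \<and> \<delta>p p > 0 \<and> (\<forall>\<eta>. 0 < \<eta> \<and> \<eta> \<le> \<delta>p p \<longrightarrow>
      measure lebesgue (T \<eta> \<inter> cball p (\<rho> p)) \<le> Cp p * \<eta>)" if "p \<in> F" for p
    using t that by (simp add: \<rho>_def Cp_def \<delta>p_def)
  have cpt: "compact F" using bd by (simp add: F_def compact_frontier_bounded)
  have cov: "F \<subseteq> (\<Union>p\<in>F. ball p (\<rho> p / 2))" using tp by force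
  obtain P where P: "P \<subseteq> F" "finite P" "F \<subseteq> (\<Union>p\<in>P. ball p (\<rho> p / 2))"
    using compactE_image[OF cpt _ cov] by blast
  have Pne: "P \<noteq> {}" using P(3) Fne by (auto simp: F_def)
  define \<delta>0 where "\<delta>0 = Min ((\<lambda>p. min (\<rho> p / 2) (\<delta>p p)) ` P)"
  have \<delta>0: "\<delta>0 > 0" using P Pne tp by (auto simp: \<delta>0_def)
  have \<delta>0le: "\<delta>0 \<le> \<rho> p / 2 \<and> \<delta>0 \<le> \<delta>p p" if "p \<in> P" for p
  proof -
    have "\<delta>0 \<le> min (\<rho> p / 2) (\<delta>p p)" unfolding \<delta>0_def using P(2) that by (intro Min_le) auto
    then show ?thesis by simp
  qed
  have Fcl: "closed F" by (simp add: F_def)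
  have FneF: "F \<noteq> {}" using Fne by (simp add: F_def)
  show ?thesis
  proof (rule exI[of _ "\<Sum>p\<in>P. Cp p"], rule exI[of _ \<delta>0], intro conjI \<delta>0 allI impI)
    fix \<eta> :: real assume \<eta>: "0 < \<eta> \<and> \<eta> \<le> \<delta>0"
    have Teq: "T \<eta> = (\<Union>p\<in>P. T \<eta> \<inter> cball p (\<rho> p))"
    proof
      show "T \<eta> \<subseteq> (\<Union>p\<in>P. T \<eta> \<inter> cball p (\<rho> p))"
      proof
        fix x assume x: "x \<in> T \<eta>"
        obtain q where q: "q \<in> F" "infdist x F = dist x q"
          using infdist_attains_inf[OF Fcl FneF] by blast
        obtain p where p: "p \<in> P" "q \<in> ball p (\<rho> p / 2)" using P(3) q(1) by blast
        have "dist p x \<le> dist p q + dist q x" by (rule dist_triangle)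
        moreover have "dist q x \<le> \<eta>" using x q by (simp add: T_def dist_commute)
        moreover have "dist p q < \<rho> p / 2" using p by simp
        moreover have "\<eta> \<le> \<rho> p / 2" using \<eta> \<delta>0le[OF p(1)] by linarith
        ultimately have "dist p x \<le> \<rho> p" by linarith
        then show "x \<in> (\<Union>p\<in>P. T \<eta> \<inter> cball p (\<rho> p))" using x p(1) by auto
      qed
      show "(\<Union>p\<in>P. T \<eta> \<inter> cball p (\<rho> p)) \<subseteq> T \<eta>" by blast
    qed
    have meas: "T \<eta> \<inter> cball p (\<rho> p) \<in> sets lebesgue" for p
    proof -
      have "compact (T \<eta> \<inter> cball p (\<rho> p))" unfolding T_def
        by (intro closed_Int_compact closed_tube compact_cball)
      then show ?thesis using lmeasurable_compact fmeasurableD by blast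
    qed
    have "measure lebesgue (T \<eta>) = measure lebesgue (\<Union>p\<in>P. T \<eta> \<inter> cball p (\<rho> p))"
      using arg_cong[where f="measure lebesgue", OF Teq] .
    also have "\<dots> \<le> (\<Sum>p\<in>P. measure lebesgue (T \<eta> \<inter> cball p (\<rho> p)))"
      by (rule measure_UNION_le[OF P(2)]) (simp add: meas)
    also have "\<dots> \<le> (\<Sum>p\<in>P. Cp p * \<eta>)"
    proof (rule sum_mono)
      fix p assume p: "p \<in> P"
      then have "p \<in> F" using P(1) by blast
      then show "measure lebesgue (T \<eta> \<inter> cball p (\<rho> p)) \<le> Cp p * \<eta>"
        using tp[of p] \<eta> \<delta>0le[OF p] by auto
    qed
    also have "\<dots> = (\<Sum>p\<in>P. Cp p) * \<eta>" by (simp add: sum_distrib_right)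
    finally show "measure lebesgue {x. infdist x (frontier \<Omega>) \<le> \<eta>} \<le> (\<Sum>p\<in>P. Cp p) * \<eta>"
      by (simp add: T_def F_def)
  qed
qed



lemma int_lt_step:
  fixes a b :: real
  assumes "a \<in> \<int>" "b \<in> \<int>" "a < b"
  shows "a + 1 \<le> b"
proof -
  obtain i where i: "a = of_int i" using assms(1) by (auto elim: Ints_cases)
  obtain j where j: "b = of_int j" using assms(2) by (auto elim: Ints_cases)
  have "i < j" using assms(3) i j by simp
  then have "i + 1 \<le> j" by simp
  then show ?thesis using i j by (metis of_int_1 of_int_add of_int_le_iff)
qed

lemma grid_cells_sub_hyperplane:
  assumes h: "h > 0" and u: "u \<in> int_pts" and v: "v \<in> int_pts" and b: "b \<in> Basis" and lt: "u \<bullet> b < v \<bullet> b"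
  shows "grid_cell h u \<inter> grid_cell h v \<subseteq> {x. b \<bullet> x = h * (u \<bullet> b + 1)}"
proof
  fix x assume x: "x \<in> grid_cell h u \<inter> grid_cell h v"
  have 1: "x \<bullet> b \<le> h * (u \<bullet> b) + h" using x b by (auto simp: mem_grid_cell)
  have 2: "h * (v \<bullet> b) \<le> x \<bullet> b" using x b by (auto simp: mem_grid_cell)
  have "u \<bullet> b + 1 \<le> v \<bullet> b" using int_lt_step[OF _ _ lt] u v b by (auto simp: int_pts_def)
  then have "h * (u \<bullet> b + 1) \<le> h * (v \<bullet> b)" using h by simp
  then have "x \<bullet> b = h * (u \<bullet> b + 1)" using 1 2 by (simp add: algebra_simps)
  then show "x \<in> {x. b \<bullet> x = h * (u \<bullet> b + 1)}" by (simp add: inner_commute)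
qed

lemma grid_cells_negligible:
  assumes h: "h > 0" and k: "k \<in> int_pts" "k' \<in> int_pts" "k \<noteq> k'"
  shows "negligible (grid_cell h k \<inter> grid_cell h k')"
proof -
  obtain b where b: "b \<in> Basis" "k \<bullet> b \<noteq> k' \<bullet> b" using k(3) euclidean_eqI by blast
  have b0: "b \<noteq> 0" using b(1) by auto
  show ?thesis
  proof (cases "k \<bullet> b < k' \<bullet> b")
    case True
    show ?thesis
      by (rule negligible_subset[OF negligible_hyperplane[of b "h * (k \<bullet> b + 1)"]])
         (use b0 grid_cells_sub_hyperplane[OF h k(1) k(2) b(1) True] in auto)
  next
    case False
    then have lt: "k' \<bullet> b < k \<bullet> b" using b(2) by linarith
    show ?thesis
      by (rule negligible_subset[OF negligible_hyperplane[of b "h * (k' \<bullet> b + 1)"]])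
         (use b0 grid_cells_sub_hyperplane[OF h k(2) k(1) b(1) lt] in auto)
  qed
qed

lemma cell_Int_closed_lmeasurable:
  "closed A \<Longrightarrow> grid_cell h k \<inter> A \<in> lmeasurable"
  by (rule lmeasurable_compact) (simp add: grid_cell_def compact_Int_closed)

lemma grid_additive:
  fixes I :: "'a::euclidean_space set"
  assumes "finite I" "I \<subseteq> int_pts" "h > 0" "closed A"
  shows "measure lebesgue (\<Union>k\<in>I. grid_cell h k \<inter> A) = (\<Sum>k\<in>I. measure lebesgue (grid_cell h k \<inter> A))"
proof (rule measure_negligible_finite_Union_image[OF assms(1)])
  show "grid_cell h k \<inter> A \<in> lmeasurable" if "k \<in> I" for k
    using cell_Int_closed_lmeasurable[OF assms(4)] .
  show "pairwise (\<lambda>x y. negligible ((grid_cell h x \<inter> A) \<inter> (grid_cell h y \<inter> A))) I"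
    unfolding pairwise_def
  proof (intro ballI impI)
    fix x y assume "x \<in> I" "y \<in> I" "x \<noteq> y"
    then have "negligible (grid_cell h x \<inter> grid_cell h y)"
      using grid_cells_negligible[OF assms(3)] assms(2) by blast
    then show "negligible ((grid_cell h x \<inter> A) \<inter> (grid_cell h y \<inter> A))"
      by (rule negligible_subset) blast
  qed
qed

lemma measure_diff_bound:
  assumes "A \<in> fmeasurable M" "B \<in> fmeasurable M" "E \<in> fmeasurable M" "A - B \<subseteq> E" "B - A \<subseteq> E"
  shows "\<bar>measure M A - measure M B\<bar> \<le> measure M E"
proof -
  have "measure M A \<le> measure M (B \<union> E)"
    by (rule measure_mono_fmeasurable) (use assms in \<open>auto intro: fmeasurableD\<close>)
  also have "\<dots> \<le> measure M B + measure M E" by (rule measure_Un_le) (use assms in \<open>auto intro: fmeasurableD\<close>)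
  finally have 1: "measure M A \<le> measure M B + measure M E" .
  have "measure M B \<le> measure M (A \<union> E)"
    by (rule measure_mono_fmeasurable) (use assms in \<open>auto intro: fmeasurableD\<close>)
  also have "\<dots> \<le> measure M A + measure M E" by (rule measure_Un_le) (use assms in \<open>auto intro: fmeasurableD\<close>)
  finally have 2: "measure M B \<le> measure M A + measure M E" .
  show ?thesis using 1 2 by linarith
qed

lemma sd_le0_iff:
  assumes opn: "open \<Omega>" and Fne: "frontier \<Omega> \<noteq> {}"
  shows "signed_dist \<Omega> x \<le> 0 \<longleftrightarrow> x \<in> closure \<Omega>"
proof (cases "x \<in> \<Omega>")
  case True
  then show ?thesis using infdist_nonneg[of x "frontier \<Omega>"] closure_subset[of \<Omega>]
    by (auto simp: signed_dist_def)
next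
  case False
  have "signed_dist \<Omega> x \<le> 0 \<longleftrightarrow> infdist x (frontier \<Omega>) = 0"
    using False infdist_nonneg[of x "frontier \<Omega>"] by (auto simp: signed_dist_def)
  also have "\<dots> \<longleftrightarrow> x \<in> frontier \<Omega>" using in_closed_iff_infdist_zero[OF frontier_closed Fne] by blast
  also have "\<dots> \<longleftrightarrow> x \<in> closure \<Omega>" using False closure_Un_frontier[of \<Omega>] by blast
  finally show ?thesis .
qed

lemma sd_abs: "\<bar>signed_dist \<Omega> x\<bar> = infdist x (frontier \<Omega>)"
  using infdist_nonneg[of x "frontier \<Omega>"] by (simp add: signed_dist_def)

lemma cell_diam:
  fixes x y :: "'a::euclidean_space"
  assumes "h > 0" "x \<in> grid_cell h k" "y \<in> grid_cell h k"
  shows "norm (x - y) \<le> real DIM('a) * h"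
proof -
  have "norm (x - y) \<le> (\<Sum>b\<in>Basis. \<bar>(x - y) \<bullet> b\<bar>)" by (rule norm_le_l1)
  also have "\<dots> \<le> (\<Sum>b\<in>(Basis::'a set). h)"
  proof (rule sum_mono)
    fix b :: 'a assume b: "b \<in> Basis"
    have "h * (k \<bullet> b) \<le> x \<bullet> b \<and> x \<bullet> b \<le> h * (k \<bullet> b) + h" using assms(2) b by (simp add: mem_grid_cell)
    moreover have "h * (k \<bullet> b) \<le> y \<bullet> b \<and> y \<bullet> b \<le> h * (k \<bullet> b) + h" using assms(3) b by (simp add: mem_grid_cell)
    ultimately show "\<bar>(x - y) \<bullet> b\<bar> \<le> h" by (simp add: inner_diff_left abs_le_iff)
  qed
  also have "\<dots> = real DIM('a) * h" by simp
  finally show ?thesis .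
qed

lemma centroid_in_cell:
  assumes "h > 0" shows "cell_centroid h k \<in> grid_cell h k"
  using assms by (auto simp: mem_grid_cell cell_centroid_def inner_add_left inner_sum_Basis algebra_simps)



lemma cell_error:
  fixes \<Omega> :: "'a::euclidean_space set"
  assumes opn: "open \<Omega>" and Fne: "frontier \<Omega> \<noteq> {}" and r0: "0 < r"
    and balls: "\<And>q. q \<in> frontier \<Omega> \<Longrightarrow> \<exists>n. norm n = 1 \<and> ball (q + r *\<^sub>R n) r \<inter> \<Omega> = {} \<and> ball (q - r *\<^sub>R n) r \<subseteq> \<Omega>"
    and cpH: "\<forall>x. cp x \<in> frontier \<Omega> \<and> dist x (cp x) = infdist x (frontier \<Omega>)"
    and h: "h > 0" and Dr: "2 * (real DIM('a) * h) \<le> r"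
    and k: "grid_cell h k \<inter> closure \<Omega> \<noteq> {}"
  shows "\<bar>elem_vol \<Omega> h cp k - measure lebesgue (grid_cell h k \<inter> closure \<Omega>)\<bar>
           \<le> measure lebesgue (grid_cell h k \<inter> {x. infdist x (frontier \<Omega>) \<le> (2 * (real DIM('a) * h))^2 / r})"
proof -
  define K where "K = grid_cell h k"
  define D where "D = real DIM('a) * h"
  define \<eta> where "\<eta> = (2*D)^2 / r"
  define F where "F = frontier \<Omega>"
  define T where "T = {x. infdist x F \<le> \<eta>}"
  have Tcl: "closed T" unfolding T_def by (rule closed_tube)
  have KT: "K \<inter> T \<in> lmeasurable" unfolding K_def by (rule cell_Int_closed_lmeasurable[OF Tcl])
  have KC: "K \<inter> closure \<Omega> \<in> lmeasurable" unfolding K_def by (rule cell_Int_closed_lmeasurable) simp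
  have goal_eq: "?thesis \<longleftrightarrow> \<bar>elem_vol \<Omega> h cp k - measure lebesgue (K \<inter> closure \<Omega>)\<bar> \<le> measure lebesgue (K \<inter> T)"
    by (simp add: K_def T_def \<eta>_def D_def F_def)
  show ?thesis
  proof (cases "K \<inter> F = {}")
    case False
    define c where "c = cell_centroid h k"
    define xp where "xp = cp c"
    have cK: "c \<in> K" using centroid_in_cell[OF h] by (simp add: K_def c_def)
    have xpF: "xp \<in> F" using cpH by (simp add: xp_def F_def)
    obtain y where y: "y \<in> K" "y \<in> F" using False by blast
    have "dist c xp = infdist c F" using cpH by (simp add: xp_def F_def)
    also have "\<dots> \<le> dist c y" by (rule infdist_le[OF y(2)])
    also have "\<dots> \<le> D" using cell_diam[OF h, of c k y] cK y(1) by (simp add: K_def D_def dist_norm)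
    finally have dcxp: "dist c xp \<le> D" .
    have near: "norm (x - xp) \<le> 2 * D" if "x \<in> K" for x
    proof -
      have "norm (x - xp) \<le> norm (x - c) + norm (c - xp)"
        using norm_triangle_ineq[of "x - c" "c - xp"] by simp
      moreover have "norm (x - c) \<le> D" using cell_diam[OF h, of x k c] that cK by (simp add: K_def D_def)
      moreover have "norm (c - xp) \<le> D" using dcxp by (simp add: dist_norm)
      ultimately show ?thesis by linarith
    qed
    obtain n where n: "norm n = 1" "ball (xp + r *\<^sub>R n) r \<inter> \<Omega> = {}" "ball (xp - r *\<^sub>R n) r \<subseteq> \<Omega>"
    proof -
      have "xp \<in> frontier \<Omega>" using xpF by (simp add: F_def)
      from balls[OF this] show ?thesis using that by blast
    qed
    note G = sd_grad[OF opn Fne r0 n]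
    have ev: "elem_vol \<Omega> h cp k = measure lebesgue {x\<in>K. (x - xp) \<bullet> n \<le> 0}"
    proof -
      have "K \<inter> frontier \<Omega> \<noteq> {}" using False by (simp add: F_def)
      then show ?thesis using G by (simp add: elem_vol_def Let_def K_def xp_def c_def)
    qed
    have Gcl: "closed {x. (x - xp) \<bullet> n \<le> 0}" by (rule closed_Collect_le) (auto intro!: continuous_intros)
    have Gset: "{x\<in>K. (x - xp) \<bullet> n \<le> 0} \<in> lmeasurable"
    proof -
      have "{x\<in>K. (x - xp) \<bullet> n \<le> 0} = K \<inter> {x. (x - xp) \<bullet> n \<le> 0}" by blast
      then show ?thesis using cell_Int_closed_lmeasurable[OF Gcl] by (simp add: K_def)
    qed
    have quad: "\<bar>signed_dist \<Omega> x - (x - xp) \<bullet> n\<bar> \<le> \<eta>" if "x \<in> K" for x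
    proof -
      have nr: "norm (x - xp) \<le> r" using near[OF that] Dr by (simp add: D_def)
      have "\<bar>signed_dist \<Omega> x - (x - xp) \<bullet> n\<bar> \<le> norm (x - xp)^2 / r"
        by (rule sd_quadratic[OF opn Fne r0 n nr])
      also have "\<dots> \<le> (2*D)^2 / r"
        using near[OF that] r0 by (intro divide_right_mono power_mono) auto
      finally show ?thesis by (simp add: \<eta>_def)
    qed
    have KCeq: "K \<inter> closure \<Omega> = {x\<in>K. signed_dist \<Omega> x \<le> 0}"
    proof -
      have "\<And>x. signed_dist \<Omega> x \<le> 0 \<longleftrightarrow> x \<in> closure \<Omega>" using sd_le0_iff[OF opn Fne] by blast
      then show ?thesis by blast
    qed
    have inT: "x \<in> T" if "\<bar>signed_dist \<Omega> x\<bar> \<le> \<eta>" for x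
    proof -
      have "infdist x F \<le> \<eta>" using that sd_abs[of \<Omega> x] unfolding F_def by linarith
      then show ?thesis unfolding T_def by simp
    qed
    have "\<bar>measure lebesgue {x\<in>K. (x - xp) \<bullet> n \<le> 0} - measure lebesgue (K \<inter> closure \<Omega>)\<bar> \<le> measure lebesgue (K \<inter> T)"
    proof (rule measure_diff_bound[OF Gset KC KT])
      show "{x\<in>K. (x - xp) \<bullet> n \<le> 0} - K \<inter> closure \<Omega> \<subseteq> K \<inter> T"
      proof
        fix x assume x: "x \<in> {x\<in>K. (x - xp) \<bullet> n \<le> 0} - K \<inter> closure \<Omega>"
        have xK: "x \<in> K" and a: "(x - xp) \<bullet> n \<le> 0" using x by blast+
        have "x \<notin> {x\<in>K. signed_dist \<Omega> x \<le> 0}" using x KCeq by blast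
        then have f: "signed_dist \<Omega> x > 0" using xK by simp
        have "\<bar>signed_dist \<Omega> x\<bar> \<le> \<eta>" using quad[OF xK] a f by linarith
        then show "x \<in> K \<inter> T" using xK inT by blast
      qed
      show "K \<inter> closure \<Omega> - {x\<in>K. (x - xp) \<bullet> n \<le> 0} \<subseteq> K \<inter> T"
      proof
        fix x assume x: "x \<in> K \<inter> closure \<Omega> - {x\<in>K. (x - xp) \<bullet> n \<le> 0}"
        have xK: "x \<in> K" using x by blast
        have a: "(x - xp) \<bullet> n > 0" using x xK by simp
        have "x \<in> {x\<in>K. signed_dist \<Omega> x \<le> 0}" using x KCeq by blast
        then have f: "signed_dist \<Omega> x \<le> 0" by simp
        have "\<bar>signed_dist \<Omega> x\<bar> \<le> \<eta>" using quad[OF xK] a f by linarith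
        then show "x \<in> K \<inter> T" using xK inT by blast
      qed
    qed
    then show ?thesis using ev goal_eq by simp
  next
    case True
    have KO1: "K \<inter> \<Omega> \<noteq> {}"
    proof -
      have "K \<inter> closure \<Omega> \<noteq> {}" using k by (simp add: K_def)
      then show ?thesis using True closure_Un_frontier[of \<Omega>] by (auto simp: F_def)
    qed
    have "K - \<Omega> = {}"
    proof (rule ccontr)
      assume "K - \<Omega> \<noteq> {}"
      have "connected K" unfolding K_def grid_cell_def by (simp add: convex_connected)
      then have "K \<inter> frontier \<Omega> \<noteq> {}" using connected_Int_frontier KO1 \<open>K - \<Omega> \<noteq> {}\<close> by blast
      then show False using True by (simp add: F_def)
    qed
    then have KO: "K \<subseteq> \<Omega>" by blast
    have ev: "elem_vol \<Omega> h cp k = measure lebesgue K"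
    proof -
      have "grid_cell h k \<inter> frontier \<Omega> = {}" using True by (simp add: F_def K_def)
      moreover have "grid_cell h k \<subseteq> \<Omega>" using KO by (simp add: K_def)
      ultimately show ?thesis by (simp add: elem_vol_def Let_def K_def)
    qed
    have "K \<inter> closure \<Omega> = K" using KO closure_subset by blast
    then show ?thesis using ev goal_eq by simp
  qed
qed



theorem theorem1:
  fixes \<Omega> :: "'a::euclidean_space set"
  assumes "bounded \<Omega>" and "C2_boundary \<Omega>"
  shows "\<exists>C h0. h0 > 0 \<and>
           (\<forall>h cp. 0 < h \<and> h < h0 \<and>
              (\<forall>x. cp x \<in> frontier \<Omega> \<and> dist x (cp x) = infdist x (frontier \<Omega>)) \<longrightarrow>
              \<bar>V_exact \<Omega> - V_h \<Omega> h cp\<bar> \<le> C * h^2)"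
proof -
  have opn: "open \<Omega>" using C2_open[OF assms(2)] .
  obtain r where r0: "0 < r" and balls: "\<And>q. q \<in> frontier \<Omega> \<Longrightarrow> \<exists>n. norm n = 1 \<and>
       ball (q + r *\<^sub>R n) r \<inter> \<Omega> = {} \<and> ball (q - r *\<^sub>R n) r \<subseteq> \<Omega>"
    by (rule uniform_balls[OF assms], rule that)
  show ?thesis
  proof (cases "frontier \<Omega> = {}")
    case True
    show ?thesis by (rule exI[of _ 0], rule exI[of _ 1]) (simp add: True)
  next
    case False
    then have Fne: "frontier \<Omega> \<noteq> {}" .
    obtain Ct \<delta>0 where \<delta>0: "\<delta>0 > 0" and tube: "\<forall>\<eta>. 0 < \<eta> \<and> \<eta> \<le> \<delta>0 \<longrightarrow>
            measure lebesgue {x. infdist x (frontier \<Omega>) \<le> \<eta>} \<le> Ct * \<eta>"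
      using tube_estimate[OF assms Fne] by blast
    define n where "n = real DIM('a)"
    have n0: "n > 0" by (simp add: n_def)
    define h0 where "h0 = min r \<delta>0 / (2*n)"
    have h00: "h0 > 0" using r0 \<delta>0 n0 by (simp add: h0_def)
    define C where "C = Ct * (4 * n^2 / r)"
    show ?thesis
    proof (rule exI[of _ C], rule exI[of _ h0], intro conjI h00 allI impI)
      fix h :: real and cp :: "'a \<Rightarrow> 'a"
      assume H: "0 < h \<and> h < h0 \<and> (\<forall>x. cp x \<in> frontier \<Omega> \<and> dist x (cp x) = infdist x (frontier \<Omega>))"
      then have h: "0 < h" and hh0: "h < h0"
        and cpH: "\<forall>x. cp x \<in> frontier \<Omega> \<and> dist x (cp x) = infdist x (frontier \<Omega>)" by auto
      have nh: "2 * (n * h) < min r \<delta>0"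
      proof -
        have "h * (2*n) < min r \<delta>0" using hh0 n0 by (simp add: h0_def less_divide_eq)
        then show ?thesis by (simp add: algebra_simps)
      qed
      have Dr: "2 * (real DIM('a) * h) \<le> r" using nh by (simp add: n_def)
      define \<eta> where "\<eta> = (2 * (real DIM('a) * h))^2 / r"
      have \<eta>0: "\<eta> > 0" using h r0 by (simp add: \<eta>_def)
      have \<eta>\<delta>: "\<eta> \<le> \<delta>0"
      proof -
        have "\<eta> = (2*(n*h)) * ((2*(n*h)) / r)" by (simp add: \<eta>_def n_def power2_eq_square)
        also have "\<dots> \<le> (2*(n*h)) * 1"
          using Dr r0 h n0 by (intro mult_left_mono) (auto simp: n_def)
        also have "\<dots> \<le> \<delta>0" using nh by simp
        finally show ?thesis .
      qed
      define F where "F = frontier \<Omega>"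
      define T where "T = {x. infdist x F \<le> \<eta>}"
      define I where "I = {k \<in> int_pts. grid_cell h k \<inter> closure \<Omega> \<noteq> {}}"
      obtain M where M: "\<And>x. x \<in> closure \<Omega> \<Longrightarrow> norm x \<le> M"
        using bounded_closure[OF assms(1)] unfolding bounded_iff by blast
      have M0: "0 \<le> M"
      proof -
        obtain q where "q \<in> frontier \<Omega>" using Fne by blast
        then have "q \<in> closure \<Omega>" by (simp add: frontier_def)
        then show ?thesis using M[of q] norm_ge_zero[of q] by linarith
      qed
      have finI: "finite I"
      proof -
        have "finite I \<and> real (card I) \<le> (\<Prod>b\<in>(Basis::'a set). M/h - (-M/h - 1) + 1)"
        proof (rule lattice_box[where lo="\<lambda>b. - M / h - 1" and hi="\<lambda>b. M / h"])
          show "- M / h - 1 \<le> M / h" for b :: 'a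
          proof -
            have "- M / h \<le> M / h" using M0 h by (intro divide_right_mono) auto
            then show ?thesis by linarith
          qed
          fix k assume k: "k \<in> I"
          then obtain x where x: "x \<in> grid_cell h k" "x \<in> closure \<Omega>" unfolding I_def by blast
          have "- M / h - 1 \<le> k \<bullet> b \<and> k \<bullet> b \<le> M / h" if b: "b \<in> Basis" for b
          proof -
            have "\<bar>x \<bullet> b\<bar> \<le> norm x" by (rule Basis_le_norm[OF b])
            then have xb: "- M \<le> x \<bullet> b" "x \<bullet> b \<le> M" using M[OF x(2)] by auto
            have c: "h * (k \<bullet> b) \<le> x \<bullet> b" "x \<bullet> b \<le> h * (k \<bullet> b) + h" using x(1) b by (auto simp: mem_grid_cell)
            have "k \<bullet> b \<le> M / h" using c xb h by (simp add: le_divide_eq mult.commute)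
            moreover have "(- M) / h \<le> k \<bullet> b + 1"
              by (subst pos_divide_le_eq[OF h]) (use c xb in \<open>simp add: algebra_simps\<close>)
            ultimately show ?thesis by simp
          qed
          then show "k \<in> int_pts \<and> (\<forall>b\<in>Basis. - M / h - 1 \<le> k \<bullet> b \<and> k \<bullet> b \<le> M / h)"
            using k by (simp add: I_def)
        qed
        then show ?thesis by blast
      qed
      have Isub: "I \<subseteq> int_pts" by (auto simp: I_def)
      have ve: "V_exact \<Omega> = measure lebesgue (closure \<Omega>)"
      proof -
        have "{x. signed_dist \<Omega> x \<le> 0} = closure \<Omega>" using sd_le0_iff[OF opn Fne] by blast
        then show ?thesis by (simp add: V_exact_def)
      qed
      have cov: "closure \<Omega> = (\<Union>k\<in>I. grid_cell h k \<inter> closure \<Omega>)"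
      proof
        show "closure \<Omega> \<subseteq> (\<Union>k\<in>I. grid_cell h k \<inter> closure \<Omega>)"
        proof
          fix x assume x: "x \<in> closure \<Omega>"
          have xc: "x \<in> grid_cell h (flr h x)" by (rule flr_cell[OF h])
          then have "flr h x \<in> I" using x flr_int unfolding I_def by blast
          then show "x \<in> (\<Union>k\<in>I. grid_cell h k \<inter> closure \<Omega>)" using x xc by blast
        qed
        show "(\<Union>k\<in>I. grid_cell h k \<inter> closure \<Omega>) \<subseteq> closure \<Omega>" by blast
      qed
      have "measure lebesgue (closure \<Omega>) = measure lebesgue (\<Union>k\<in>I. grid_cell h k \<inter> closure \<Omega>)"
        using arg_cong[where f="measure lebesgue", OF cov] .
      also have "\<dots> = (\<Sum>k\<in>I. measure lebesgue (grid_cell h k \<inter> closure \<Omega>))"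
        by (rule grid_additive[OF finI Isub h]) simp
      finally have ve2: "V_exact \<Omega> = (\<Sum>k\<in>I. measure lebesgue (grid_cell h k \<inter> closure \<Omega>))"
        using ve by simp
      have vh: "V_h \<Omega> h cp = (\<Sum>k\<in>I. elem_vol \<Omega> h cp k)" by (simp add: V_h_def I_def)
      have per: "\<bar>elem_vol \<Omega> h cp k - measure lebesgue (grid_cell h k \<inter> closure \<Omega>)\<bar>
                 \<le> measure lebesgue (grid_cell h k \<inter> T)" if "k \<in> I" for k
      proof -
        have "grid_cell h k \<inter> closure \<Omega> \<noteq> {}" using that by (simp add: I_def)
        from cell_error[OF opn Fne r0 balls cpH h Dr this] show ?thesis
          by (simp add: T_def F_def \<eta>_def)
      qed
      have Tcl: "closed T" unfolding T_def by (rule closed_tube)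
      have Tbd: "bounded T"
      proof -
        have "bounded F" unfolding F_def
          by (rule bounded_subset[OF bounded_closure[OF assms(1)]]) (simp add: frontier_def)
        then obtain M' where M': "\<And>q. q \<in> F \<Longrightarrow> norm q \<le> M'" unfolding bounded_iff by blast
        have FneF: "F \<noteq> {}" using Fne by (simp add: F_def)
        have "norm x \<le> M' + \<eta>" if "x \<in> T" for x
        proof -
          obtain q where q: "q \<in> F" "infdist x F = dist x q"
            using infdist_attains_inf[OF _ FneF] by (auto simp: F_def)
          have "norm x \<le> norm q + norm (x - q)" using norm_triangle_ineq[of q "x - q"] by simp
          moreover have "norm (x - q) \<le> \<eta>" using that q by (simp add: T_def dist_norm)
          ultimately show ?thesis using M'[OF q(1)] by linarith
        qed
        then show ?thesis unfolding bounded_iff by blast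
      qed
      have Tfm: "T \<in> fmeasurable lebesgue"
        using lmeasurable_compact compact_eq_bounded_closed Tcl Tbd by blast
      have UTfm: "(\<Union>k\<in>I. grid_cell h k \<inter> T) \<in> fmeasurable lebesgue"
        by (rule fmeasurable.finite_UN[OF finI]) (rule cell_Int_closed_lmeasurable[OF Tcl])
      have sumT: "(\<Sum>k\<in>I. measure lebesgue (grid_cell h k \<inter> T)) \<le> measure lebesgue T"
      proof -
        have "(\<Sum>k\<in>I. measure lebesgue (grid_cell h k \<inter> T)) = measure lebesgue (\<Union>k\<in>I. grid_cell h k \<inter> T)"
          by (rule grid_additive[OF finI Isub h Tcl, symmetric])
        also have "\<dots> \<le> measure lebesgue T"
          by (rule measure_mono_fmeasurable[OF _ fmeasurableD[OF UTfm] Tfm]) blast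
        finally show ?thesis .
      qed
      have mT: "measure lebesgue T \<le> Ct * \<eta>" using tube \<eta>0 \<eta>\<delta> by (simp add: T_def F_def)
      have "\<bar>V_exact \<Omega> - V_h \<Omega> h cp\<bar>
          = \<bar>\<Sum>k\<in>I. (measure lebesgue (grid_cell h k \<inter> closure \<Omega>) - elem_vol \<Omega> h cp k)\<bar>"
        by (simp add: ve2 vh sum_subtractf)
      also have "\<dots> \<le> (\<Sum>k\<in>I. \<bar>measure lebesgue (grid_cell h k \<inter> closure \<Omega>) - elem_vol \<Omega> h cp k\<bar>)"
        by (rule sum_abs)
      also have "\<dots> \<le> (\<Sum>k\<in>I. measure lebesgue (grid_cell h k \<inter> T))"
      proof (rule sum_mono)
        fix k assume "k \<in> I"
        then show "\<bar>measure lebesgue (grid_cell h k \<inter> closure \<Omega>) - elem_vol \<Omega> h cp k\<bar>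
            \<le> measure lebesgue (grid_cell h k \<inter> T)"
          using per[of k] by (simp add: abs_minus_commute)
      qed
      also have "\<dots> \<le> measure lebesgue T" by (rule sumT)
      also have "\<dots> \<le> Ct * \<eta>" by (rule mT)
      also have "Ct * \<eta> = C * h^2"
      proof -
        have "(2 * (real DIM('a) * h))^2 = 4 * n^2 * h^2" by (simp add: n_def power_mult_distrib)
        then show ?thesis using r0 by (simp add: \<eta>_def C_def)
      qed
      finally show "\<bar>V_exact \<Omega> - V_h \<Omega> h cp\<bar> \<le> C * h^2" .
    qed
  qed
qed


end
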